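(* Let $\tau$ be a vocabulary. For every formula $\phi$ of $\mathcal{D}(\mathsf{M})[\tau]$ with free variables $\mathrm{Fr}(\phi)=\{y_1,\dots,y_n\}$ there is a sentence $\psi$ of $\mathrm{SO}(\mathsf{Most}_f)$ over the vocabulary $\tau\cup\{S\}$, where $S$ is a new $n$-ary relation symbol, such that for every finite $\tau$-structure $\mathfrak A$ and every team $X$ over $\mathfrak A$ with $\mathrm{dom}(X)=\mathrm{Fr}(\phi)$: $$\mathfrak A\models_X\phi\iff(\mathfrak A,\mathrm{rel}(X))\models\psi,$$ where $S$ is interpreted by $\mathrm{rel}(X)$.
   Context: All structures are finite. Dependence logic with majority, $\mathcal{D}(\mathsf{M})[\tau]$: formulas over a vocabulary $\tau$ in negation normal form, built from first-order literals (atomic formulas and negated atomic formulas), dependence atoms $=\!(t_1,\dots,t_n)$ ($t_i$ terms) and their negations $\neg=\!(t_1,\dots,t_n)$, using $\wedge$, $\vee$, $\exists x$, $\forall x$ and $\mathsf{M}x$. $\mathrm{Fr}(\phi)$ denotes the set of free variables, defined as in first-order logic ($\mathsf{M}x$ binds $x$), where the free variables of $=\!(t_1,\dots,t_n)$ are all variables occurring in $t_1,\dots,t_n$. A team $X$ over a structure $\mathfrak A$ with domain $A$ and with finite variable domain $\mathrm{dom}(X)$ is a set of assignments $s:\mathrm{dom}(X)\to A$. If $\mathrm{dom}(X)=\{y_1,\dots,y_n\}$ (in this fixed order), $\mathrm{rel}(X)=\{(s(y_1),\dots,s(y_n)):s\in X\}\subseteq A^n$. For $F:X\to A$ let $X(F/x)=\{s(F(s)/x):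 s\in X\}$ and $X(A/x)=\{s(a/x): s\in X, a\in A\}$, where $s(a/x)$ agrees with $s$ except that it maps $x$ to $a$. Satisfaction $\mathfrak A\models_X\phi$ (for teams whose domain contains the free variables of $\phi$): for a first-order literal, every $s\in X$ satisfies it in the usual sense; $\mathfrak A\models_X =\!(t_1,\dots,t_n)$ iff any $s,s'\in X$ giving equal values to $t_1,\dots,t_{n-1}$ give equal values to $t_n$ ($=\!()$ is always true); $\mathfrak A\models_X\neg=\!(t_1,\dots,t_n)$ iff $X=\emptyset$; $\mathfrak A\models_X\psi\wedge\chi$ iff both hold; $\mathfrak A\models_X\psi\vee\chi$ iff $X=Y\cup Z$ with $\mathfrak A\models_Y\psi$ and $\mathfrak A\models_Z\chi$; $\mathfrak A\models_X\exists x\psi$ iff $\mathfrak A\models_{X(F/x)}\psi$ for some $F:X\to A$; $\mathfrak A\models_X\forall x\psi$ iff $\mathfrak A\models_{X(A/x)}\psi$; $\mathfrak A\models_X\mathsf{M}x\psi$ iff for at least $|A|^{|X|}/2$ many functions $F:X\to A$ we have $\mathfrak A\models_{X(F/x)}\psi$. For $k\ge1$, the quantifier $\mathsf{Most}^k_f$ binds a $k$-ary function symbol $g$: for $|A|=n$, $\mathfrak A\models\mathsf{Most}^k_f g\,\phi(g)$ iff $|\{f:A^k\to A\mid\mathfrak A\models\phi(f)\}|\ge n^{n^k}/2$. $\mathrm{SO}(\mathsf{Most}_f)$ is second-order logic extended with $\mathsf{Most}^k_f$ for all $k\ge1$. *)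

theory Defs
  imports Main "HOL-Library.FuncSet"
begin

text \<open>A vocabulary tau is given by relation symbols of type 'r with arities arR and
function symbols of type 'f with arities arF (constants have arity 0).
First-order variables are natural numbers.\<close>

datatype 'f trm = Var nat | Fun 'f "'f trm list"

datatype ('r, 'f) dm =
    DEq "'f trm" "'f trm"
  | DNEq "'f trm" "'f trm"
  | DRel 'r "'f trm list"
  | DNRel 'r "'f trm list"
  | DDep "'f trm list"
  | DNDep "'f trm list"
  | DAnd "('r, 'f) dm" "('r, 'f) dm"
  | DOr "('r, 'f) dm" "('r, 'f) dm"
  | DEx nat "('r, 'f) dm"
  | DAll nat "('r, 'f) dm"
  | DMost nat "('r, 'f) dm"

fun trm_vars :: "'f trm \<Rightarrow> nat set" where
  "trm_vars (Var x) = {x}"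
| "trm_vars (Fun f ts) = \<Union> (set (map trm_vars ts))"

fun trm_wf :: "('f \<Rightarrow> nat) \<Rightarrow> 'f trm \<Rightarrow> bool" where
  "trm_wf arF (Var x) = True"
| "trm_wf arF (Fun f ts) = (length ts = arF f \<and> (\<forall>t\<in>set ts. trm_wf arF t))"

fun dm_fr :: "('r, 'f) dm \<Rightarrow> nat set" where
  "dm_fr (DEq t u) = trm_vars t \<union> trm_vars u"
| "dm_fr (DNEq t u) = trm_vars t \<union> trm_vars u"
| "dm_fr (DRel R ts) = \<Union> (set (map trm_vars ts))"
| "dm_fr (DNRel R ts) = \<Union> (set (map trm_vars ts))"
| "dm_fr (DDep ts) = \<Union> (set (map trm_vars ts))"
| "dm_fr (DNDep ts) = \<Union> (set (map trm_vars ts))"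
| "dm_fr (DAnd p q) = dm_fr p \<union> dm_fr q"
| "dm_fr (DOr p q) = dm_fr p \<union> dm_fr q"
| "dm_fr (DEx x p) = dm_fr p - {x}"
| "dm_fr (DAll x p) = dm_fr p - {x}"
| "dm_fr (DMost x p) = dm_fr p - {x}"

fun dm_wf :: "('r \<Rightarrow> nat) \<Rightarrow> ('f \<Rightarrow> nat) \<Rightarrow> ('r, 'f) dm \<Rightarrow> bool" where
  "dm_wf arR arF (DEq t u) = (trm_wf arF t \<and> trm_wf arF u)"
| "dm_wf arR arF (DNEq t u) = (trm_wf arF t \<and> trm_wf arF u)"
| "dm_wf arR arF (DRel R ts) = (length ts = arR R \<and> (\<forall>t\<in>set ts. trm_wf arF t))"
| "dm_wf arR arF (DNRel R ts) = (length ts = arR R \<and> (\<forall>t\<in>set ts. trm_wf arF t))"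
| "dm_wf arR arF (DDep ts) = (\<forall>t\<in>set ts. trm_wf arF t)"
| "dm_wf arR arF (DNDep ts) = (\<forall>t\<in>set ts. trm_wf arF t)"
| "dm_wf arR arF (DAnd p q) = (dm_wf arR arF p \<and> dm_wf arR arF q)"
| "dm_wf arR arF (DOr p q) = (dm_wf arR arF p \<and> dm_wf arR arF q)"
| "dm_wf arR arF (DEx x p) = dm_wf arR arF p"
| "dm_wf arR arF (DAll x p) = dm_wf arR arF p"
| "dm_wf arR arF (DMost x p) = dm_wf arR arF p"

text \<open>Finite tau-structure with domain A (elements represented by naturals),
relation interpretation RI and function interpretation FI.\<close>
definition is_structure :: "('f \<Rightarrow> nat) \<Rightarrow> 'a set \<Rightarrow> ('f \<Rightarrow> 'a list \<Rightarrow> 'a) \<Rightarrow> bool" where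
  "is_structure arF A FI \<longleftrightarrow> finite A \<and> A \<noteq> {} \<and>
     (\<forall>f xs. length xs = arF f \<and> set xs \<subseteq> A \<longrightarrow> FI f xs \<in> A)"

definition is_team :: "'a set \<Rightarrow> nat set \<Rightarrow> (nat \<rightharpoonup> 'a) set \<Rightarrow> bool" where
  "is_team A V X \<longleftrightarrow> finite V \<and> (\<forall>s\<in>X. dom s = V \<and> ran s \<subseteq> A)"

fun trm_eval :: "('f \<Rightarrow> 'a list \<Rightarrow> 'a) \<Rightarrow> (nat \<rightharpoonup> 'a) \<Rightarrow> 'f trm \<Rightarrow> 'a" where
  "trm_eval FI s (Var x) = the (s x)"
| "trm_eval FI s (Fun f ts) = FI f (map (trm_eval FI s) ts)"

definition team_sup :: "(nat \<rightharpoonup> 'a) set \<Rightarrow> ((nat \<rightharpoonup> 'a) \<Rightarrow> 'a) \<Rightarrow> nat \<Rightarrow> (nat \<rightharpoonup> 'a) set" where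
  "team_sup X F x = (\<lambda>s. s(x \<mapsto> F s)) ` X"

definition team_dup :: "(nat \<rightharpoonup> 'a) set \<Rightarrow> 'a set \<Rightarrow> nat \<Rightarrow> (nat \<rightharpoonup> 'a) set" where
  "team_dup X A x = {s(x \<mapsto> a) | s a. s \<in> X \<and> a \<in> A}"

fun dm_sat :: "'a set \<Rightarrow> ('r \<Rightarrow> 'a list \<Rightarrow> bool) \<Rightarrow> ('f \<Rightarrow> 'a list \<Rightarrow> 'a)
    \<Rightarrow> (nat \<rightharpoonup> 'a) set \<Rightarrow> ('r, 'f) dm \<Rightarrow> bool" where
  "dm_sat A RI FI X (DEq t u) = (\<forall>s\<in>X. trm_eval FI s t = trm_eval FI s u)"
| "dm_sat A RI FI X (DNEq t u) = (\<forall>s\<in>X. trm_eval FI s t \<noteq> trm_eval FI s u)"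
| "dm_sat A RI FI X (DRel R ts) = (\<forall>s\<in>X. RI R (map (trm_eval FI s) ts))"
| "dm_sat A RI FI X (DNRel R ts) = (\<forall>s\<in>X. \<not> RI R (map (trm_eval FI s) ts))"
| "dm_sat A RI FI X (DDep ts) = (ts = [] \<or>
     (\<forall>s\<in>X. \<forall>s'\<in>X. map (trm_eval FI s) (butlast ts) = map (trm_eval FI s') (butlast ts)
        \<longrightarrow> trm_eval FI s (last ts) = trm_eval FI s' (last ts)))"
| "dm_sat A RI FI X (DNDep ts) = (X = {})"
| "dm_sat A RI FI X (DAnd p q) = (dm_sat A RI FI X p \<and> dm_sat A RI FI X q)"
| "dm_sat A RI FI X (DOr p q) =
     (\<exists>Y Z. X = Y \<union> Z \<and> dm_sat A RI FI Y p \<and> dm_sat A RI FI Z q)"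
| "dm_sat A RI FI X (DEx x p) = (\<exists>F \<in> X \<rightarrow>\<^sub>E A. dm_sat A RI FI (team_sup X F x) p)"
| "dm_sat A RI FI X (DAll x p) = dm_sat A RI FI (team_dup X A x) p"
| "dm_sat A RI FI X (DMost x p) =
     (card A ^ card X \<le> 2 * card {F \<in> X \<rightarrow>\<^sub>E A. dm_sat A RI FI (team_sup X F x) p})"

text \<open>rel(X) with respect to the fixed enumeration ys of dom(X).\<close>
definition team_rel :: "nat list \<Rightarrow> (nat \<rightharpoonup> 'a) set \<Rightarrow> 'a list set" where
  "team_rel ys X = (\<lambda>s. map (\<lambda>y. the (s y)) ys) ` X"

datatype 'f sotrm = SVar nat | SFun 'f "'f sotrm list" | SFVar nat "'f sotrm list"

datatype ('r, 'f) so =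
    SEq "'f sotrm" "'f sotrm"
  | SRel 'r "'f sotrm list"
  | SS "'f sotrm list"               (* the new relation symbol S *)
  | SRVar nat "'f sotrm list"
  | SNot "('r, 'f) so"
  | SAnd "('r, 'f) so" "('r, 'f) so"
  | SEx nat "('r, 'f) so"
  | SExR nat nat "('r, 'f) so"
  | SExF nat nat "('r, 'f) so"
  | SMostF nat nat "('r, 'f) so"     (* Most^k_f g, binding function variable g of arity k *)

fun sotrm_wf :: "('f \<Rightarrow> nat) \<Rightarrow> (nat \<rightharpoonup> nat) \<Rightarrow> nat set \<Rightarrow> 'f sotrm \<Rightarrow> bool" where
  "sotrm_wf arF GF V (SVar x) = (x \<in> V)"
| "sotrm_wf arF GF V (SFun f ts) = (length ts = arF f \<and> (\<forall>t\<in>set ts. sotrm_wf arF GF V t))"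
| "sotrm_wf arF GF V (SFVar g ts) = (GF g = Some (length ts) \<and> (\<forall>t\<in>set ts. sotrm_wf arF GF V t))"

text \<open>Well-formedness over tau plus an n-ary S, with all first-order, relation and
function variables bound (arity contexts GR, GF).\<close>
fun so_wf :: "('r \<Rightarrow> nat) \<Rightarrow> ('f \<Rightarrow> nat) \<Rightarrow> nat \<Rightarrow> (nat \<rightharpoonup> nat) \<Rightarrow> (nat \<rightharpoonup> nat)
    \<Rightarrow> nat set \<Rightarrow> ('r, 'f) so \<Rightarrow> bool" where
  "so_wf arR arF n GR GF V (SEq t u) = (sotrm_wf arF GF V t \<and> sotrm_wf arF GF V u)"
| "so_wf arR arF n GR GF V (SRel R ts) = (length ts = arR R \<and> (\<forall>t\<in>set ts. sotrm_wf arF GF V t))"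
| "so_wf arR arF n GR GF V (SS ts) = (length ts = n \<and> (\<forall>t\<in>set ts. sotrm_wf arF GF V t))"
| "so_wf arR arF n GR GF V (SRVar P ts) = (GR P = Some (length ts) \<and> (\<forall>t\<in>set ts. sotrm_wf arF GF V t))"
| "so_wf arR arF n GR GF V (SNot p) = so_wf arR arF n GR GF V p"
| "so_wf arR arF n GR GF V (SAnd p q) = (so_wf arR arF n GR GF V p \<and> so_wf arR arF n GR GF V q)"
| "so_wf arR arF n GR GF V (SEx x p) = so_wf arR arF n GR GF (insert x V) p"
| "so_wf arR arF n GR GF V (SExR P k p) = so_wf arR arF n (GR(P \<mapsto> k)) GF V p"
| "so_wf arR arF n GR GF V (SExF g k p) = so_wf arR arF n GR (GF(g \<mapsto> k)) V p"
| "so_wf arR arF n GR GF V (SMostF g k p) = (1 \<le> k \<and> so_wf arR arF n GR (GF(g \<mapsto> k)) V p)"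

definition so_sentence :: "('r \<Rightarrow> nat) \<Rightarrow> ('f \<Rightarrow> nat) \<Rightarrow> nat \<Rightarrow> ('r, 'f) so \<Rightarrow> bool" where
  "so_sentence arR arF n p = so_wf arR arF n Map.empty Map.empty {} p"

definition tuples :: "'a set \<Rightarrow> nat \<Rightarrow> 'a list set" where
  "tuples A k = {xs. length xs = k \<and> set xs \<subseteq> A}"

fun sotrm_eval :: "('f \<Rightarrow> 'a list \<Rightarrow> 'a) \<Rightarrow> (nat \<Rightarrow> 'a) \<Rightarrow> (nat \<Rightarrow> 'a list \<Rightarrow> 'a)
    \<Rightarrow> 'f sotrm \<Rightarrow> 'a" where
  "sotrm_eval FI e fe (SVar x) = e x"
| "sotrm_eval FI e fe (SFun f ts) = FI f (map (sotrm_eval FI e fe) ts)"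
| "sotrm_eval FI e fe (SFVar g ts) = fe g (map (sotrm_eval FI e fe) ts)"

text \<open>Satisfaction in the structure (A, RI, FI) expanded by S := SI, under
first-order env e, relation-variable env re, function-variable env fe.\<close>
fun so_sat :: "'a set \<Rightarrow> ('r \<Rightarrow> 'a list \<Rightarrow> bool) \<Rightarrow> ('f \<Rightarrow> 'a list \<Rightarrow> 'a) \<Rightarrow> 'a list set
    \<Rightarrow> (nat \<Rightarrow> 'a) \<Rightarrow> (nat \<Rightarrow> 'a list set) \<Rightarrow> (nat \<Rightarrow> 'a list \<Rightarrow> 'a) \<Rightarrow> ('r, 'f) so \<Rightarrow> bool" where
  "so_sat A RI FI SI e re fe (SEq t u) = (sotrm_eval FI e fe t = sotrm_eval FI e fe u)"
| "so_sat A RI FI SI e re fe (SRel R ts) = RI R (map (sotrm_eval FI e fe) ts)"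
| "so_sat A RI FI SI e re fe (SS ts) = (map (sotrm_eval FI e fe) ts \<in> SI)"
| "so_sat A RI FI SI e re fe (SRVar P ts) = (map (sotrm_eval FI e fe) ts \<in> re P)"
| "so_sat A RI FI SI e re fe (SNot p) = (\<not> so_sat A RI FI SI e re fe p)"
| "so_sat A RI FI SI e re fe (SAnd p q) = (so_sat A RI FI SI e re fe p \<and> so_sat A RI FI SI e re fe q)"
| "so_sat A RI FI SI e re fe (SEx x p) = (\<exists>a\<in>A. so_sat A RI FI SI (e(x := a)) re fe p)"
| "so_sat A RI FI SI e re fe (SExR P k p) =
     (\<exists>Q \<subseteq> tuples A k. so_sat A RI FI SI e (re(P := Q)) fe p)"
| "so_sat A RI FI SI e re fe (SExF g k p) =
     (\<exists>f \<in> tuples A k \<rightarrow>\<^sub>E A. so_sat A RI FI SI e re (fe(g := f)) p)"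
| "so_sat A RI FI SI e re fe (SMostF g k p) =
     (card A ^ (card A ^ k) \<le> 2 * card {f \<in> tuples A k \<rightarrow>\<^sub>E A. so_sat A RI FI SI e re (fe(g := f)) p})"

definition so_models :: "'a set \<Rightarrow> ('r \<Rightarrow> 'a list \<Rightarrow> bool) \<Rightarrow> ('f \<Rightarrow> 'a list \<Rightarrow> 'a)
    \<Rightarrow> 'a list set \<Rightarrow> ('r, 'f) so \<Rightarrow> bool" where
  "so_models A RI FI SI p = so_sat A RI FI SI (\<lambda>_. undefined) (\<lambda>_. {}) (\<lambda>_ _. undefined) p"

end

theory Submission
  imports Defs
begin

fun idx :: "nat list \<Rightarrow> nat \<Rightarrow> nat" where
  "idx [] y = 0" | "idx (z#zs) y = (if z = y then 0 else Suc (idx zs y))"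

lemma idx_props: "y \<in> set ys \<Longrightarrow> idx ys y < length ys \<and> ys ! idx ys y = y"
  by (induction ys) auto

fun tt :: "nat list \<Rightarrow> nat \<Rightarrow> 'f trm \<Rightarrow> 'f sotrm" where
  "tt ys off (Var y) = SVar (off + idx ys y)"
| "tt ys off (Fun f ts) = SFun f (map (tt ys off) ts)"

definition vars :: "nat \<Rightarrow> nat \<Rightarrow> 'f sotrm list" where
  "vars off k = map SVar [off..<off+k]"

fun exs :: "nat \<Rightarrow> nat \<Rightarrow> ('r,'f) so \<Rightarrow> ('r,'f) so" where
  "exs off 0 p = p" | "exs off (Suc k) p = SEx off (exs (Suc off) k p)"

definition alls :: "nat \<Rightarrow> nat \<Rightarrow> ('r,'f) so \<Rightarrow> ('r,'f) so" where
  "alls off k p = SNot (exs off k (SNot p))"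
definition imp :: "('r,'f) so \<Rightarrow> ('r,'f) so \<Rightarrow> ('r,'f) so" where
  "imp a b = SNot (SAnd a (SNot b))"
definition iff :: "('r,'f) so \<Rightarrow> ('r,'f) so \<Rightarrow> ('r,'f) so" where
  "iff a b = SAnd (imp a b) (imp b a)"
definition sor :: "('r,'f) so \<Rightarrow> ('r,'f) so \<Rightarrow> ('r,'f) so" where
  "sor a b = SNot (SAnd (SNot a) (SNot b))"
definition STrue :: "('r,'f) so" where
  "STrue = SEx 0 (SEq (SVar 0) (SVar 0))"
fun conjL :: "('r,'f) so list \<Rightarrow> ('r,'f) so" where
  "conjL [] = STrue" | "conjL (p#ps) = SAnd p (conjL ps)"
definition setv :: "(nat \<Rightarrow> 'a) \<Rightarrow> nat \<Rightarrow> 'a list \<Rightarrow> nat \<Rightarrow> 'a" where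
  "setv e off vs = (\<lambda>x. if off \<le> x \<and> x < off + length vs then vs ! (x - off) else e x)"

definition tup :: "nat list \<Rightarrow> (nat \<rightharpoonup> 'a) \<Rightarrow> 'a list" where
  "tup ys s = map (\<lambda>y. the (s y)) ys"

lemma tuples_Suc: "vs \<in> tuples A (Suc k) \<longleftrightarrow> (\<exists>a vs'. vs = a # vs' \<and> a \<in> A \<and> vs' \<in> tuples A k)"
  by (cases vs) (auto simp: tuples_def)

lemma setv_Cons: "setv (e(off := a)) (Suc off) vs = setv e off (a # vs)"
  by (rule ext) (auto simp: setv_def nth_Cons' Suc_diff_Suc)

lemma sat_exs: "so_sat A RI FI SI e re fe (exs off k p) \<longleftrightarrow>
   (\<exists>vs\<in>tuples A k. so_sat A RI FI SI (setv e off vs) re fe p)"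
proof (induction k arbitrary: off e)
  case 0
  have "setv e off [] = e" by (rule ext) (auto simp add: setv_def)
  then show ?case by (simp add: tuples_def)
next
  case (Suc k)
  have "so_sat A RI FI SI e re fe (exs off (Suc k) p) \<longleftrightarrow>
     (\<exists>a\<in>A. \<exists>vs\<in>tuples A k. so_sat A RI FI SI (setv e off (a#vs)) re fe p)"
    by (simp add: Suc setv_Cons del: fun_upd_apply)
  also have "\<dots> \<longleftrightarrow> (\<exists>vs\<in>tuples A (Suc k). so_sat A RI FI SI (setv e off vs) re fe p)"
    using tuples_Suc[of _ A k] by (metis list.inject)
  finally show ?case .
qed

lemma sat_alls: "so_sat A RI FI SI e re fe (alls off k p) \<longleftrightarrow>
   (\<forall>vs\<in>tuples A k. so_sat A RI FI SI (setv e off vs) re fe p)"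
  by (simp add: alls_def sat_exs)

lemma sat_imp[simp]: "so_sat A RI FI SI e re fe (imp a b) \<longleftrightarrow> (so_sat A RI FI SI e re fe a \<longrightarrow> so_sat A RI FI SI e re fe b)"
  by (simp add: imp_def)
lemma sat_iff[simp]: "so_sat A RI FI SI e re fe (iff a b) \<longleftrightarrow> (so_sat A RI FI SI e re fe a \<longleftrightarrow> so_sat A RI FI SI e re fe b)"
  by (auto simp add: iff_def)
lemma sat_sor[simp]: "so_sat A RI FI SI e re fe (sor a b) \<longleftrightarrow> (so_sat A RI FI SI e re fe a \<or> so_sat A RI FI SI e re fe b)"
  by (simp add: sor_def)
lemma sat_STrue: "A \<noteq> {} \<Longrightarrow> so_sat A RI FI SI e re fe STrue"
  by (auto simp: STrue_def)
lemma sat_conjL: "A \<noteq> {} \<Longrightarrow> so_sat A RI FI SI e re fe (conjL ps) \<longleftrightarrow> (\<forall>p\<in>set ps. so_sat A RI FI SI e re fe p)"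
  by (induction ps) (auto simp: sat_STrue)

lemma eval_vars: "length vs = k \<Longrightarrow> map (sotrm_eval FI (setv e off vs) fe) (vars off k) = vs"
  by (auto simp: vars_def setv_def intro!: nth_equalityI)

lemma setv_in: "i < length vs \<Longrightarrow> setv e off vs (off + i) = vs ! i"
  by (simp add: setv_def)
lemma setv_out: "x < off \<or> off + length vs \<le> x \<Longrightarrow> setv e off vs x = e x"
  by (auto simp add: setv_def)

lemma eval_tt: "trm_vars t \<subseteq> set ys \<Longrightarrow> (\<forall>i<length ys. e (off+i) = the (s (ys!i))) \<Longrightarrow>
   sotrm_eval FI e fe (tt ys off t) = trm_eval FI s t"
proof (induction t)
  case (Var x)
  then show ?case using idx_props[of x ys] by auto
next
  case (Fun f ts)
  have "\<And>x. x \<in> set ts \<Longrightarrow> sotrm_eval FI e fe (tt ys off x) = trm_eval FI s x"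
    using Fun.prems by (intro Fun.IH) auto
  then show ?case by (simp cong: map_cong)
qed

lemma wf_tt: "trm_wf arF t \<Longrightarrow> trm_vars t \<subseteq> set ys \<Longrightarrow> {off..<off+length ys} \<subseteq> V \<Longrightarrow>
   sotrm_wf arF GF V (tt ys off t)"
proof (induction t)
  case (Var x)
  then show ?case using idx_props[of x ys] by auto
next
  case (Fun f ts)
  then show ?case by auto
qed

lemma wf_exs: "so_wf arR arF n GR GF V (exs off k p) \<longleftrightarrow> so_wf arR arF n GR GF (V \<union> {off..<off+k}) p"
proof (induction k arbitrary: off V)
  case 0 then show ?case by simp
next
  case (Suc k)
  have "insert off V \<union> {Suc off..<Suc off + k} = V \<union> {off..<off + Suc k}" by auto
  then show ?case by (simp add: Suc)
qed

lemma wf_alls: "so_wf arR arF n GR GF V (alls off k p) \<longleftrightarrow> so_wf arR arF n GR GF (V \<union> {off..<off+k}) p"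
  by (simp add: alls_def wf_exs)
lemma wf_imp[simp]: "so_wf arR arF n GR GF V (imp a b) \<longleftrightarrow> so_wf arR arF n GR GF V a \<and> so_wf arR arF n GR GF V b"
  by (simp add: imp_def)
lemma wf_iff[simp]: "so_wf arR arF n GR GF V (iff a b) \<longleftrightarrow> so_wf arR arF n GR GF V a \<and> so_wf arR arF n GR GF V b"
  by (auto simp add: iff_def)
lemma wf_sor[simp]: "so_wf arR arF n GR GF V (sor a b) \<longleftrightarrow> so_wf arR arF n GR GF V a \<and> so_wf arR arF n GR GF V b"
  by (simp add: sor_def)
lemma wf_STrue[simp]: "so_wf arR arF n GR GF V STrue"
  by (simp add: STrue_def)
lemma wf_conjL: "(\<forall>p\<in>set ps. so_wf arR arF n GR GF V p) \<Longrightarrow> so_wf arR arF n GR GF V (conjL ps)"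
  by (induction ps) auto
lemma wf_vars: "{off..<off+k} \<subseteq> V \<Longrightarrow> \<forall>t\<in>set (vars off k). sotrm_wf arF GF V t"
  by (auto simp: vars_def)
lemma length_vars[simp]: "length (vars off k) = k" by (simp add: vars_def)

lemma count_ext:
  fixes h :: "'x \<Rightarrow> 'y" and A :: "'c set"
  assumes D: "finite D" and A: "finite A" and inj: "inj_on h X" and hX: "h ` X \<subseteq> D" and X: "finite X"
  shows "card {g \<in> D \<rightarrow>\<^sub>E A. \<Phi> (restrict (g \<circ> h) X)} = card {F \<in> X \<rightarrow>\<^sub>E A. \<Phi> F} * card A ^ (card D - card X)"
proof -
  define T where "T = h ` X"
  define hi where "hi = the_inv_into X h"
  define \<Psi> :: "('x \<Rightarrow> 'c) \<times> ('y \<Rightarrow> 'c) \<Rightarrow> 'y \<Rightarrow> 'c" where "\<Psi> = (\<lambda>(F, G). restrict (\<lambda>d. if d \<in> T then F (hi d) else G d) D)"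
  define S where "S = {F \<in> X \<rightarrow>\<^sub>E A. \<Phi> F}"
  define W where "W = (D - T) \<rightarrow>\<^sub>E A"
  have hih: "s \<in> X \<Longrightarrow> hi (h s) = s" for s unfolding hi_def using inj by (rule the_inv_into_f_f)
  have hiX: "d \<in> T \<Longrightarrow> hi d \<in> X" for d unfolding hi_def T_def using inj by (simp add: the_inv_into_into)
  have hhi: "d \<in> T \<Longrightarrow> h (hi d) = d" for d unfolding hi_def T_def using inj by (simp add: f_the_inv_into_f)
  have TD: "T \<subseteq> D" using hX T_def by simp
  have restr: "F \<in> X \<rightarrow>\<^sub>E A \<Longrightarrow> restrict (\<Psi> (F, G) \<circ> h) X = F" for F :: "'x \<Rightarrow> 'c" and G
  proof (rule ext)
    fix s assume F: "F \<in> X \<rightarrow>\<^sub>E A"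
    show "restrict (\<Psi> (F, G) \<circ> h) X s = F s"
      using F hX hih by (cases "s \<in> X") (auto simp: \<Psi>_def T_def PiE_def extensional_def)
  qed
  have injP: "inj_on \<Psi> (S \<times> W)"
  proof (rule inj_onI)
    fix p q assume p: "p \<in> S \<times> W" and q: "q \<in> S \<times> W" and eq: "\<Psi> p = \<Psi> q"
    obtain F G where pFG: "p = (F, G)" by force
    obtain F' G' where qFG: "q = (F', G')" by force
    have F: "F \<in> X \<rightarrow>\<^sub>E A" "F' \<in> X \<rightarrow>\<^sub>E A" "G \<in> W" "G' \<in> W" using p q pFG qFG S_def by auto
    have "F = F'" using restr[of F G] restr[of F' G'] eq pFG qFG F by metis
    moreover have "G = G'"
    proof (rule ext)
      fix d show "G d = G' d"
      proof (cases "d \<in> D - T")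
        case True
        then have "\<Psi> (F, G) d = G d" "\<Psi> (F', G') d = G' d" by (auto simp: \<Psi>_def)
        then show ?thesis using eq pFG qFG by simp
      next
        case False
        then show ?thesis using F(3,4) by (auto simp: W_def PiE_def extensional_def)
      qed
    qed
    ultimately show "p = q" using pFG qFG by simp
  qed
  have img: "\<Psi> ` (S \<times> W) = {g \<in> D \<rightarrow>\<^sub>E A. \<Phi> (restrict (g \<circ> h) X)}"
  proof
    show "\<Psi> ` (S \<times> W) \<subseteq> {g \<in> D \<rightarrow>\<^sub>E A. \<Phi> (restrict (g \<circ> h) X)}"
    proof
      fix g assume "g \<in> \<Psi> ` (S \<times> W)"
      then obtain F G where FG: "F \<in> S" "G \<in> W" "g = \<Psi> (F, G)" by auto
      have "g \<in> D \<rightarrow>\<^sub>E A" using FG hiX by (auto simp: \<Psi>_def S_def W_def PiE_iff)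
      moreover have "\<Phi> (restrict (g \<circ> h) X)" using FG restr[of F G] by (simp add: S_def)
      ultimately show "g \<in> {g \<in> D \<rightarrow>\<^sub>E A. \<Phi> (restrict (g \<circ> h) X)}" by simp
    qed
  next
    show "{g \<in> D \<rightarrow>\<^sub>E A. \<Phi> (restrict (g \<circ> h) X)} \<subseteq> \<Psi> ` (S \<times> W)"
    proof
      fix g assume g: "g \<in> {g \<in> D \<rightarrow>\<^sub>E A. \<Phi> (restrict (g \<circ> h) X)}"
      define F where "F = restrict (g \<circ> h) X"
      define G where "G = restrict g (D - T)"
      have "F \<in> S" using g hX by (auto simp: F_def S_def PiE_iff)
      moreover have "G \<in> W" using g by (auto simp: G_def W_def)
      moreover have "\<Psi> (F, G) = g"
      proof (rule ext)
        fix d show "\<Psi> (F, G) d = g d"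
          using g hiX hhi by (cases "d \<in> D") (auto simp: \<Psi>_def F_def G_def PiE_def extensional_def)
      qed
      ultimately show "g \<in> \<Psi> ` (S \<times> W)" by force
    qed
  qed
  have cW: "card W = card A ^ (card D - card X)"
  proof -
    have "card W = card A ^ card (D - T)" using D by (simp add: W_def card_PiE)
    moreover have "card (D - T) = card D - card X"
      using card_Diff_subset[of T D] TD D finite_subset[OF TD D] card_image[OF inj] T_def by simp
    ultimately show ?thesis by simp
  qed
  have "card {g \<in> D \<rightarrow>\<^sub>E A. \<Phi> (restrict (g \<circ> h) X)} = card (S \<times> W)"
    using img injP card_image by metis
  also have "\<dots> = card S * card W" by (rule card_cartesian_product)
  finally show ?thesis using cW S_def by simp
qed

definition xt :: "nat list \<Rightarrow> nat \<Rightarrow> nat list" where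
  "xt ys x = (if x \<in> set ys then ys else ys @ [x])"

lemma xt_set[simp]: "set (xt ys x) = insert x (set ys)" by (auto simp: xt_def)
lemma xt_distinct: "distinct ys \<Longrightarrow> distinct (xt ys x)" by (auto simp: xt_def)
lemma xt_len: "length ys \<le> length (xt ys x)" by (auto simp: xt_def)
lemma xt_nth: "i < length (xt ys x) \<Longrightarrow> xt ys x ! i \<noteq> x \<Longrightarrow> i < length ys \<and> xt ys x ! i = ys ! i"
  by (auto simp: xt_def nth_append split: if_splits)

lemma tup_len[simp]: "length (tup ys s) = length ys" by (simp add: tup_def)

lemma ran_upd_sub: "ran (m(a \<mapsto> b)) \<subseteq> insert b (ran m)"
  by (auto simp: ran_def)

lemma team_val: "is_team A V X \<Longrightarrow> s \<in> X \<Longrightarrow> y \<in> V \<Longrightarrow> \<exists>b. s y = Some b \<and> b \<in> A"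
proof -
  assume T: "is_team A V X" and s: "s \<in> X" and y: "y \<in> V"
  then obtain b where b: "s y = Some b" unfolding is_team_def by blast
  then have "b \<in> ran s" by (auto simp: ran_def)
  then show ?thesis using b T s unfolding is_team_def by auto
qed

lemma tup_in: "is_team A (set ys) X \<Longrightarrow> s \<in> X \<Longrightarrow> tup ys s \<in> tuples A (length ys)"
  using team_val[of A "set ys" X s] by (fastforce simp: tuples_def tup_def)

lemma tup_inj: "is_team A (set ys) X \<Longrightarrow> inj_on (tup ys) X"
proof (rule inj_onI)
  fix s s' assume T: "is_team A (set ys) X" and s: "s \<in> X" "s' \<in> X" and eq: "tup ys s = tup ys s'"
  show "s = s'"
  proof (rule ext)
    fix y show "s y = s' y"
    proof (cases "y \<in> set ys")
      case True
      then obtain i where i: "i < length ys" "ys ! i = y" by (metis in_set_conv_nth)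
      have "the (s y) = the (s' y)" using eq i arg_cong[OF eq, of "\<lambda>l. l ! i"] by (simp add: tup_def)
      moreover have "y \<in> dom s" "y \<in> dom s'" using T s True by (auto simp: is_team_def)
      ultimately show ?thesis by (metis domD option.sel)
    next
      case False
      then have "y \<notin> dom s" "y \<notin> dom s'" using T s by (auto simp: is_team_def)
      then show ?thesis by (simp add: domIff)
    qed
  qed
qed

lemma tuples_finite: "finite A \<Longrightarrow> finite (tuples A k)"
  unfolding tuples_def using finite_lists_length_eq[of A k] by (simp add: conj_commute)
lemma tuples_card: "finite A \<Longrightarrow> card (tuples A k) = card A ^ k"
  unfolding tuples_def using card_lists_length_eq[of A k] by (simp add: conj_commute)

lemma team_finite: "finite A \<Longrightarrow> is_team A (set ys) X \<Longrightarrow> finite X"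
proof -
  assume A: "finite A" and T: "is_team A (set ys) X"
  have "tup ys ` X \<subseteq> tuples A (length ys)" using tup_in[OF T] by auto
  then have "finite (tup ys ` X)" using tuples_finite[OF A] finite_subset by blast
  then show "finite X" using finite_image_iff[OF tup_inj[OF T]] by simp
qed

lemma team_sub: "is_team A V X \<Longrightarrow> Y \<subseteq> X \<Longrightarrow> is_team A V Y"
  unfolding is_team_def by (meson subsetD)

lemma team_rel_tup: "team_rel ys X = tup ys ` X" by (simp add: team_rel_def tup_def)

lemma tup_upd: "dom s = set ys \<Longrightarrow>
  tup (xt ys x) (s(x \<mapsto> a)) = map (\<lambda>i. if xt ys x ! i = x then a else tup ys s ! i) [0..<length (xt ys x)]"
proof (rule nth_equalityI)
  fix i assume "dom s = set ys" "i < length (tup (xt ys x) (s(x \<mapsto> a)))"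
  then have i: "i < length (xt ys x)" by simp
  show "tup (xt ys x) (s(x \<mapsto> a)) ! i = map (\<lambda>i. if xt ys x ! i = x then a else tup ys s ! i) [0..<length (xt ys x)] ! i"
    using i xt_nth[OF i] by (auto simp: tup_def)
qed simp

lemma team_sup_team: "is_team A (set ys) X \<Longrightarrow> (\<And>s. s \<in> X \<Longrightarrow> F s \<in> A) \<Longrightarrow> is_team A (set (xt ys x)) (team_sup X F x)"
  unfolding is_team_def team_sup_def using ran_upd_sub by fastforce

lemma team_dup_team: "is_team A (set ys) X \<Longrightarrow> is_team A (set (xt ys x)) (team_dup X A x)"
  unfolding is_team_def team_dup_def using ran_upd_sub by fastforce

lemma rel_sup: "is_team A (set ys) X \<Longrightarrow>
  team_rel (xt ys x) (team_sup X F x) = (\<lambda>s. map (\<lambda>i. if xt ys x ! i = x then F s else tup ys s ! i) [0..<length (xt ys x)]) ` X"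
  unfolding team_rel_tup team_sup_def image_image
  by (rule image_cong[OF refl], rule tup_upd) (auto simp: is_team_def)

lemma rel_dup: "is_team A (set ys) X \<Longrightarrow>
  team_rel (xt ys x) (team_dup X A x) = (\<lambda>(s, a). map (\<lambda>i. if xt ys x ! i = x then a else tup ys s ! i) [0..<length (xt ys x)]) ` (X \<times> A)"
proof -
  assume T: "is_team A (set ys) X"
  have "team_dup X A x = (\<lambda>(s, a). s(x \<mapsto> a)) ` (X \<times> A)" by (auto simp: team_dup_def)
  then have "team_rel (xt ys x) (team_dup X A x) = (\<lambda>(s, a). tup (xt ys x) (s(x \<mapsto> a))) ` (X \<times> A)"
    by (simp add: team_rel_tup image_image case_prod_unfold)
  also have "\<dots> = (\<lambda>(s, a). map (\<lambda>i. if xt ys x ! i = x then a else tup ys s ! i) [0..<length (xt ys x)]) ` (X \<times> A)"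
    using T by (intro image_cong[OF refl]) (auto simp: is_team_def tup_upd)
  finally show ?thesis .
qed

definition eqconj :: "nat list \<Rightarrow> nat \<Rightarrow> 'f sotrm \<Rightarrow> ('r,'f) so" where
  "eqconj ys' x tm = conjL (map (\<lambda>i. SEq (SVar i) (if ys'!i = x then tm else SVar (length ys' + i))) [0..<length ys'])"

definition qdef :: "nat \<Rightarrow> nat \<Rightarrow> nat \<Rightarrow> nat \<Rightarrow> ('r,'f) so \<Rightarrow> ('r,'f) so" where
  "qdef P Q n n' eqs = alls 0 n' (iff (SRVar Q (vars 0 n')) (exs n' n (SAnd (SRVar P (vars n' n)) eqs)))"

definition lit :: "nat \<Rightarrow> nat \<Rightarrow> nat \<Rightarrow> ('r,'f) so \<Rightarrow> ('r,'f) so" where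
  "lit P off n L = alls off n (imp (SRVar P (vars off n)) L)"

lemma sat_qdef: "so_sat A RI FI SI e re fe (qdef P Q n n' eqs) \<longleftrightarrow>
  (\<forall>ws\<in>tuples A n'. ws \<in> re Q \<longleftrightarrow> (\<exists>vs\<in>tuples A n. vs \<in> re P \<and> so_sat A RI FI SI (setv (setv e 0 ws) n' vs) re fe eqs))"
  by (auto simp: qdef_def sat_alls sat_exs eval_vars tuples_def)

lemma sat_eqconj0: "A \<noteq> {} \<Longrightarrow> so_sat A RI FI SI E re fe (eqconj ys' x tm) \<longleftrightarrow>
     (\<forall>i<length ys'. E i = (if ys'!i = x then sotrm_eval FI E fe tm else E (length ys' + i)))"
proof -
  assume A: "A \<noteq> {}"
  have "so_sat A RI FI SI E re fe (eqconj ys' x tm) \<longleftrightarrow>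
     (\<forall>i\<in>set [0..<length ys']. so_sat A RI FI SI E re fe (SEq (SVar i) (if ys'!i = x then tm else SVar (length ys' + i))))"
    unfolding eqconj_def sat_conjL[OF A] by simp
  also have "\<dots> \<longleftrightarrow> (\<forall>i<length ys'. E i = (if ys'!i = x then sotrm_eval FI E fe tm else E (length ys' + i)))"
    by (intro iffI allI impI ballI) (simp_all split: if_splits)
  finally show ?thesis .
qed

lemma sat_eqconj:
  assumes "A \<noteq> {}" "\<forall>i<length ys'. E i = ws!i" "\<forall>i<length vs. E (length ys'+i) = vs!i"
    "length ws = length ys'" "\<forall>i<length ys'. ys'!i \<noteq> x \<longrightarrow> i < length vs"
  shows "so_sat A RI FI SI E re fe (eqconj ys' x tm) \<longleftrightarrow>
    ws = map (\<lambda>i. if ys'!i = x then sotrm_eval FI E fe tm else vs!i) [0..<length ys']"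
proof -
  have "\<forall>i<length ys'. (E i = (if ys'!i = x then sotrm_eval FI E fe tm else E (length ys' + i))) \<longleftrightarrow>
      (ws ! i = (if ys'!i = x then sotrm_eval FI E fe tm else vs ! i))"
  proof (intro allI impI)
    fix i assume i: "i < length ys'"
    show "(E i = (if ys'!i = x then sotrm_eval FI E fe tm else E (length ys' + i))) \<longleftrightarrow>
      (ws ! i = (if ys'!i = x then sotrm_eval FI E fe tm else vs ! i))"
    proof -
      have e1: "E i = ws!i" using assms(2) i by blast
      show ?thesis
      proof (cases "ys'!i = x")
        case True then show ?thesis by (simp add: e1)
      next
        case False
        then have "i < length vs" using assms(5) i by blast
        then have "E (length ys' + i) = vs!i" using assms(3) by blast
        then show ?thesis using False by (simp add: e1)
      qed
    qed
  qed
  then have "so_sat A RI FI SI E re fe (eqconj ys' x tm) \<longleftrightarrow>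
     (\<forall>i<length ys'. ws ! i = (if ys'!i = x then sotrm_eval FI E fe tm else vs ! i))"
    unfolding sat_eqconj0[OF assms(1)] by blast
  also have "\<dots> \<longleftrightarrow> ws = map (\<lambda>i. if ys'!i = x then sotrm_eval FI E fe tm else vs!i) [0..<length ys']"
  proof -
    have "length (map (\<lambda>i. if ys'!i = x then sotrm_eval FI E fe tm else vs!i) [0..<length ys']) = length ws"
      using assms(4) by simp
    then show ?thesis unfolding list_eq_iff_nth_eq by auto
  qed
  finally show ?thesis .
qed

lemma sat_lit: "is_team A (set ys) X \<Longrightarrow> re P = team_rel ys X \<Longrightarrow>
  so_sat A RI FI SI e re fe (lit P off (length ys) L) \<longleftrightarrow> (\<forall>s\<in>X. so_sat A RI FI SI (setv e off (tup ys s)) re fe L)"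
proof -
  assume T: "is_team A (set ys) X" and R: "re P = team_rel ys X"
  have "so_sat A RI FI SI e re fe (lit P off (length ys) L) \<longleftrightarrow>
    (\<forall>vs\<in>tuples A (length ys). vs \<in> re P \<longrightarrow> so_sat A RI FI SI (setv e off vs) re fe L)"
    by (simp add: lit_def sat_alls eval_vars tuples_def)
  also have "\<dots> \<longleftrightarrow> (\<forall>s\<in>X. so_sat A RI FI SI (setv e off (tup ys s)) re fe L)"
    unfolding R team_rel_tup using tup_in[OF T] by blast
  finally show ?thesis .
qed

lemma env_tup: "\<forall>i<length ys. setv e off (tup ys s) (off+i) = the (s (ys!i))"
  by (simp add: setv_def tup_def)

lemma wf_eqconj: "{0..<length (xt ys x)} \<union> {length (xt ys x)..<length (xt ys x) + length ys} \<subseteq> V \<Longrightarrow>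
  sotrm_wf arF GF V tm \<Longrightarrow> so_wf arR arF n0 GR GF V (eqconj (xt ys x) x tm)"
proof -
  assume V: "{0..<length (xt ys x)} \<union> {length (xt ys x)..<length (xt ys x) + length ys} \<subseteq> V"
    and tm: "sotrm_wf arF GF V tm"
  have "so_wf arR arF n0 GR GF V (SEq (SVar i) (if xt ys x ! i = x then tm else SVar (length (xt ys x) + i)))"
    if i: "i < length (xt ys x)" for i
  proof (cases "xt ys x ! i = x")
    case True then show ?thesis using i V tm by auto
  next
    case False
    then have "i < length ys" using xt_nth[OF i] by simp
    then have "length (xt ys x) + i \<in> V" using V by auto
    then show ?thesis using i V False by auto
  qed
  then show ?thesis unfolding eqconj_def by (intro wf_conjL) auto
qed

lemma wf_lit: "GR P = Some n \<Longrightarrow> so_wf arR arF n0 GR GF (V \<union> {off..<off+n}) L \<Longrightarrow> so_wf arR arF n0 GR GF V (lit P off n L)"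
proof -
  assume "GR P = Some n" "so_wf arR arF n0 GR GF (V \<union> {off..<off+n}) L"
  moreover have "\<forall>t\<in>set (vars off n). sotrm_wf arF GF (V \<union> {off..<off+n}) t" by (rule wf_vars) blast
  ultimately show ?thesis by (simp add: lit_def wf_alls)
qed

lemma wf_qdef: "GR P = Some n \<Longrightarrow> GR Q = Some n' \<Longrightarrow> so_wf arR arF n0 GR GF (V \<union> {0..<n'} \<union> {n'..<n'+n}) eqs \<Longrightarrow>
   so_wf arR arF n0 GR GF V (qdef P Q n n' eqs)"
  by (auto simp: qdef_def wf_alls wf_exs intro!: wf_vars)

definition cvar :: "nat list \<Rightarrow> nat \<Rightarrow> nat" where
  "cvar ys x = length (xt ys x) + length ys"

definition exbody :: "nat \<Rightarrow> nat list \<Rightarrow> nat \<Rightarrow> ('r,'f) so \<Rightarrow> ('r,'f) so" where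
  "exbody P ys x trp = SExR (Suc P) (length (xt ys x)) (SAnd
     (qdef P (Suc P) (length ys) (length (xt ys x))
        (eqconj (xt ys x) x (SFVar 0 (vars (length (xt ys x)) (length ys) @ [SVar (cvar ys x)])))) trp)"

definition allbody :: "nat \<Rightarrow> nat list \<Rightarrow> nat \<Rightarrow> ('r,'f) so \<Rightarrow> ('r,'f) so" where
  "allbody P ys x trp = SExR (Suc P) (length (xt ys x)) (SAnd
     (qdef P (Suc P) (length ys) (length (xt ys x))
        (SEx (cvar ys x) (eqconj (xt ys x) x (SVar (cvar ys x))))) trp)"

definition depf :: "nat \<Rightarrow> nat list \<Rightarrow> 'f trm list \<Rightarrow> ('r,'f) so" where
  "depf P ys ts = lit P 0 (length ys) (lit P (length ys) (length ys)
      (imp (conjL (map (\<lambda>t. SEq (tt ys 0 t) (tt ys (length ys) t)) (butlast ts)))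
           (SEq (tt ys 0 (last ts)) (tt ys (length ys) (last ts)))))"

definition orf :: "nat \<Rightarrow> nat \<Rightarrow> ('r,'f) so \<Rightarrow> ('r,'f) so \<Rightarrow> ('r,'f) so" where
  "orf P n a b = SExR (Suc P) n (SExR (Suc (Suc P)) n (SAnd
      (alls 0 n (iff (SRVar P (vars 0 n)) (sor (SRVar (Suc P) (vars 0 n)) (SRVar (Suc (Suc P)) (vars 0 n)))))
      (SAnd a b)))"

fun tr :: "('r,'f) dm \<Rightarrow> nat list \<Rightarrow> nat \<Rightarrow> ('r,'f) so" where
  "tr (DEq t u) ys P = lit P 0 (length ys) (SEq (tt ys 0 t) (tt ys 0 u))"
| "tr (DNEq t u) ys P = lit P 0 (length ys) (SNot (SEq (tt ys 0 t) (tt ys 0 u)))"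
| "tr (DRel R ts) ys P = lit P 0 (length ys) (SRel R (map (tt ys 0) ts))"
| "tr (DNRel R ts) ys P = lit P 0 (length ys) (SNot (SRel R (map (tt ys 0) ts)))"
| "tr (DDep ts) ys P = (if ts = [] then STrue else depf P ys ts)"
| "tr (DNDep ts) ys P = SNot (exs 0 (length ys) (SRVar P (vars 0 (length ys))))"
| "tr (DAnd p q) ys P = SAnd (tr p ys P) (tr q ys P)"
| "tr (DOr p q) ys P = orf P (length ys) (tr p ys (Suc P)) (tr q ys (Suc (Suc P)))"
| "tr (DEx x p) ys P = SEx (cvar ys x) (SExF 0 (Suc (length ys)) (exbody P ys x (tr p (xt ys x) (Suc P))))"
| "tr (DAll x p) ys P = allbody P ys x (tr p (xt ys x) (Suc P))"
| "tr (DMost x p) ys P = SEx (cvar ys x) (SMostF 0 (Suc (length ys)) (exbody P ys x (tr p (xt ys x) (Suc P))))"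

lemma wf_tr: "dm_wf arR arF \<phi> \<Longrightarrow> dm_fr \<phi> \<subseteq> set ys \<Longrightarrow> GR P = Some (length ys) \<Longrightarrow>
  so_wf arR arF n0 GR GF V (tr \<phi> ys P)"
proof (induction \<phi> arbitrary: ys P GR GF V)
  case (DEq t u)
  then show ?case unfolding tr.simps by (intro wf_lit) (auto intro!: wf_tt)
next
  case (DNEq t u)
  then show ?case unfolding tr.simps by (intro wf_lit) (auto intro!: wf_tt)
next
  case (DRel R ts)
  then show ?case unfolding tr.simps by (intro wf_lit) (auto intro!: wf_tt)
next
  case (DNRel R ts)
  then show ?case unfolding tr.simps by (intro wf_lit) (auto intro!: wf_tt)
next
  case (DDep ts)
  show ?case
  proof (cases "ts = []")
    case True then show ?thesis by simp
  next
    case False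
    have tw: "trm_wf arF t \<and> trm_vars t \<subseteq> set ys" if "t \<in> set ts" for t
      using DDep.prems(1,2) that by (simp add: UN_subset_iff)
    have "last ts \<in> set ts" using False by simp
    then have l: "trm_wf arF (last ts) \<and> trm_vars (last ts) \<subseteq> set ys" using tw by blast
    have b: "trm_wf arF t \<and> trm_vars t \<subseteq> set ys" if "t \<in> set (butlast ts)" for t
      by (rule tw[OF in_set_butlastD[OF that]])
    let ?V = "V \<union> {0..<0 + length ys} \<union> {length ys..<length ys + length ys}"
    have s1: "{0..<0 + length ys} \<subseteq> ?V" "{length ys..<length ys + length ys} \<subseteq> ?V"
      by (rule subset_trans[OF Un_upper2 Un_upper1], rule Un_upper2)
    have tw2: "sotrm_wf arF GF ?V (tt ys 0 t) \<and> sotrm_wf arF GF ?V (tt ys (length ys) t)"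
      if "trm_wf arF t \<and> trm_vars t \<subseteq> set ys" for t
      using that wf_tt[OF _ _ s1(1)] wf_tt[OF _ _ s1(2)] by blast
    have X: "so_wf arR arF n0 GR GF ?V
      (imp (conjL (map (\<lambda>t. SEq (tt ys 0 t) (tt ys (length ys) t)) (butlast ts)))
           (SEq (tt ys 0 (last ts)) (tt ys (length ys) (last ts))))"
      using tw2[OF l] tw2[OF b] by (simp add: wf_conjL)
    have "so_wf arR arF n0 GR GF V (depf P ys ts)"
      unfolding depf_def by (rule wf_lit[where GR=GR and P=P and n="length ys", OF DDep.prems(3)],
         rule wf_lit[where GR=GR and P=P and n="length ys", OF DDep.prems(3)], rule X)
    then show ?thesis using False by simp
  qed
next
  case (DNDep ts)
  then show ?case using wf_vars[of 0 "length ys" "V \<union> {0..<0+length ys}" arF GF] by (simp add: wf_exs)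
next
  case (DAnd p q)
  then show ?case by simp
next
  case (DOr p q)
  let ?GR = "GR(Suc P \<mapsto> length ys, Suc (Suc P) \<mapsto> length ys)"
  have "so_wf arR arF n0 ?GR GF V (tr p ys (Suc P))" "so_wf arR arF n0 ?GR GF V (tr q ys (Suc (Suc P)))"
    using DOr by (auto intro!: DOr.IH)
  moreover have "\<forall>t\<in>set (vars 0 (length ys)). sotrm_wf arF GF (V \<union> {0..<0 + length ys}) t"
    by (rule wf_vars) blast
  ultimately show ?case using DOr.prems(3) by (simp add: orf_def wf_alls)
next
  case (DEx x p)
  let ?n = "length ys" and ?n' = "length (xt ys x)" and ?c = "cvar ys x"
  let ?GR = "GR(Suc P \<mapsto> ?n')" and ?GF = "GF(0 \<mapsto> Suc ?n)" and ?V = "insert ?c V"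
  have "so_wf arR arF n0 ?GR ?GF ?V (tr p (xt ys x) (Suc P))" using DEx by (auto intro!: DEx.IH)
  moreover have "so_wf arR arF n0 ?GR ?GF (?V \<union> {0..<?n'} \<union> {?n'..<?n'+?n})
     (eqconj (xt ys x) x (SFVar 0 (vars ?n' ?n @ [SVar ?c])))"
  proof (rule wf_eqconj)
    show "sotrm_wf arF ?GF (?V \<union> {0..<?n'} \<union> {?n'..<?n'+?n}) (SFVar 0 (vars ?n' ?n @ [SVar ?c]))"
      using wf_vars[of ?n' ?n "?V \<union> {0..<?n'} \<union> {?n'..<?n'+?n}" arF ?GF] by auto
  qed auto
  ultimately show ?case using DEx.prems(3)
    by (auto simp: exbody_def intro!: wf_qdef)
next
  case (DMost x p)
  let ?n = "length ys" and ?n' = "length (xt ys x)" and ?c = "cvar ys x"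
  let ?GR = "GR(Suc P \<mapsto> ?n')" and ?GF = "GF(0 \<mapsto> Suc ?n)" and ?V = "insert ?c V"
  have "so_wf arR arF n0 ?GR ?GF ?V (tr p (xt ys x) (Suc P))" using DMost by (auto intro!: DMost.IH)
  moreover have "so_wf arR arF n0 ?GR ?GF (?V \<union> {0..<?n'} \<union> {?n'..<?n'+?n})
     (eqconj (xt ys x) x (SFVar 0 (vars ?n' ?n @ [SVar ?c])))"
  proof (rule wf_eqconj)
    show "sotrm_wf arF ?GF (?V \<union> {0..<?n'} \<union> {?n'..<?n'+?n}) (SFVar 0 (vars ?n' ?n @ [SVar ?c]))"
      using wf_vars[of ?n' ?n "?V \<union> {0..<?n'} \<union> {?n'..<?n'+?n}" arF ?GF] by auto
  qed auto
  ultimately show ?case using DMost.prems(3)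
    by (auto simp: exbody_def intro!: wf_qdef)
next
  case (DAll x p)
  let ?n = "length ys" and ?n' = "length (xt ys x)" and ?c = "cvar ys x"
  let ?GR = "GR(Suc P \<mapsto> ?n')"
  have "so_wf arR arF n0 ?GR GF V (tr p (xt ys x) (Suc P))" using DAll by (auto intro!: DAll.IH)
  moreover have "so_wf arR arF n0 ?GR GF (insert ?c (V \<union> {0..<?n'} \<union> {?n'..<?n'+?n}))
     (eqconj (xt ys x) x (SVar ?c))"
    by (rule wf_eqconj) auto
  ultimately show ?case using DAll.prems(3)
    by (auto simp: allbody_def intro!: wf_qdef)
qed

lemma sat_body_generic:
  assumes qd: "\<And>Q. Q \<subseteq> tuples A n' \<Longrightarrow> so_sat A RI FI SI e (re(Q0 := Q)) fe qf \<longleftrightarrow> Q = Qt"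
    and Qt: "Qt \<subseteq> tuples A n'"
  shows "so_sat A RI FI SI e re fe (SExR Q0 n' (SAnd qf trp)) \<longleftrightarrow> so_sat A RI FI SI e (re(Q0 := Qt)) fe trp"
  using qd Qt by auto

lemma eq_from_tuples: "Q \<subseteq> T \<Longrightarrow> Qt \<subseteq> T \<Longrightarrow> (\<forall>ws\<in>T. ws \<in> Q \<longleftrightarrow> ws \<in> Qt) \<longleftrightarrow> Q = Qt"
  by blast

lemma sat_exbody:
  assumes A: "finite A" "A \<noteq> {}"
    and T: "is_team A (set ys) X" and R: "re P = team_rel ys X"
    and c: "e (cvar ys x) = c0" "c0 \<in> A" and g: "fe 0 = g" "g \<in> tuples A (Suc (length ys)) \<rightarrow>\<^sub>E A"
    and IH: "\<And>X' re'. is_team A (set (xt ys x)) X' \<Longrightarrow> re' (Suc P) = team_rel (xt ys x) X' \<Longrightarrow>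
       so_sat A RI FI SI e re' fe trp \<longleftrightarrow> dm_sat A RI FI X' p"
  shows "so_sat A RI FI SI e re fe (exbody P ys x trp) \<longleftrightarrow>
     dm_sat A RI FI (team_sup X (restrict (g \<circ> (\<lambda>s. tup ys s @ [c0])) X) x) p"
proof -
  define n where "n = length ys"
  define ys' where "ys' = xt ys x"
  define n' where "n' = length ys'"
  define F where "F = restrict (g \<circ> (\<lambda>s. tup ys s @ [c0])) X"
  define X' where "X' = team_sup X F x"
  define W where "W = (\<lambda>vs. map (\<lambda>i. if ys'!i = x then g (vs @ [c0]) else vs!i) [0..<n'])"
  have hD: "tup ys s @ [c0] \<in> tuples A (Suc n)" if "s \<in> X" for s
    using tup_in[OF T that] c(2) by (auto simp: tuples_def n_def)
  have FA: "F s \<in> A" if "s \<in> X" for s using g(2) hD[OF that] that by (auto simp: F_def n_def)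
  have T': "is_team A (set ys') X'" unfolding X'_def ys'_def by (rule team_sup_team[OF T FA])
  define Qt where "Qt = team_rel ys' X'"
  have Qt_sub: "Qt \<subseteq> tuples A n'" using tup_in[OF T'] by (auto simp: Qt_def team_rel_tup n'_def)
  have Qt_eq: "Qt = (\<lambda>s. W (tup ys s)) ` X"
    unfolding Qt_def X'_def ys'_def rel_sup[OF T]
    by (rule image_cong[OF refl]) (simp add: W_def F_def n'_def ys'_def)
  have nn: "n \<le> n'" using xt_len by (simp add: n_def n'_def ys'_def)
  have eqsat: "so_sat A RI FI SI (setv (setv e 0 ws) n' vs) re' fe
        (eqconj ys' x (SFVar 0 (vars n' n @ [SVar (cvar ys x)]))) \<longleftrightarrow> ws = W vs"
    if ws: "ws \<in> tuples A n'" and vs: "vs \<in> tuples A n" for ws vs re'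
  proof -
    let ?E = "setv (setv e 0 ws) n' vs"
    have lw: "length ws = n'" and lv: "length vs = n" using ws vs by (auto simp: tuples_def)
    have E1: "\<forall>i<length ys'. ?E i = ws!i"
      using lw by (auto simp: setv_def n'_def)
    have E2: "\<forall>i<length vs. ?E (length ys' + i) = vs!i"
      by (auto simp: setv_def n'_def)
    have Ec: "?E (cvar ys x) = c0"
      using lw lv c(1) by (auto simp: setv_def cvar_def n'_def n_def ys'_def)
    have tm: "sotrm_eval FI ?E fe (SFVar 0 (vars n' n @ [SVar (cvar ys x)])) = g (vs @ [c0])"
      using eval_vars[OF lv, of FI "setv e 0 ws" n' fe] Ec g(1) by simp
    have cond: "\<forall>i<length ys'. ys'!i \<noteq> x \<longrightarrow> i < length vs"
      using xt_nth lv by (auto simp: ys'_def n_def)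
    show ?thesis
      using sat_eqconj[OF A(2) E1 E2 _ cond, of RI FI SI re' fe "SFVar 0 (vars n' n @ [SVar (cvar ys x)])", unfolded tm] lw
      unfolding W_def n'_def by simp
  qed
  have qd: "so_sat A RI FI SI e (re(Suc P := Q)) fe (qdef P (Suc P) n n'
        (eqconj ys' x (SFVar 0 (vars n' n @ [SVar (cvar ys x)])))) \<longleftrightarrow> Q = Qt"
    if Q: "Q \<subseteq> tuples A n'" for Q
  proof -
    have "so_sat A RI FI SI e (re(Suc P := Q)) fe (qdef P (Suc P) n n'
        (eqconj ys' x (SFVar 0 (vars n' n @ [SVar (cvar ys x)])))) \<longleftrightarrow>
      (\<forall>ws\<in>tuples A n'. ws \<in> Q \<longleftrightarrow> (\<exists>vs\<in>tuples A n. vs \<in> re P \<and> ws = W vs))"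
      unfolding sat_qdef using eqsat by simp
    also have "\<dots> \<longleftrightarrow> (\<forall>ws\<in>tuples A n'. ws \<in> Q \<longleftrightarrow> ws \<in> Qt)"
    proof -
      have "(\<exists>vs\<in>tuples A n. vs \<in> re P \<and> ws = W vs) \<longleftrightarrow> ws \<in> Qt" for ws
        unfolding R team_rel_tup Qt_eq using tup_in[OF T] n_def by blast
      then show ?thesis by simp
    qed
    also have "\<dots> \<longleftrightarrow> Q = Qt" by (rule eq_from_tuples[OF Q Qt_sub])
    finally show ?thesis .
  qed
  have "so_sat A RI FI SI e re fe (exbody P ys x trp) \<longleftrightarrow> so_sat A RI FI SI e (re(Suc P := Qt)) fe trp"
    unfolding exbody_def using sat_body_generic[OF qd Qt_sub] by (simp add: n_def n'_def ys'_def)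
  also have "\<dots> \<longleftrightarrow> dm_sat A RI FI X' p"
    by (rule IH) (use T' Qt_def ys'_def in auto)
  finally show ?thesis by (simp add: X'_def F_def)
qed

lemma sat_allbody:
  fixes A :: "'a set"
  assumes A: "finite A" "A \<noteq> {}"
    and T: "is_team A (set ys) X" and R: "re P = team_rel ys X"
    and IH: "\<And>X' re'. is_team A (set (xt ys x)) X' \<Longrightarrow> re' (Suc P) = team_rel (xt ys x) X' \<Longrightarrow>
       so_sat A RI FI SI e re' fe trp \<longleftrightarrow> dm_sat A RI FI X' p"
  shows "so_sat A RI FI SI e re fe (allbody P ys x trp) \<longleftrightarrow> dm_sat A RI FI (team_dup X A x) p"
proof -
  define n where "n = length ys"
  define ys' where "ys' = xt ys x"
  define n' where "n' = length ys'"
  define X' where "X' = team_dup X A x"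
  define W :: "'a list \<Rightarrow> 'a \<Rightarrow> 'a list" where "W = (\<lambda>vs a. map (\<lambda>i. if ys'!i = x then a else vs!i) [0..<n'])"
  have T': "is_team A (set ys') X'" unfolding X'_def ys'_def by (rule team_dup_team[OF T])
  define Qt where "Qt = team_rel ys' X'"
  have Qt_sub: "Qt \<subseteq> tuples A n'" using tup_in[OF T'] by (auto simp: Qt_def team_rel_tup n'_def)
  have Qt_eq: "Qt = (\<lambda>(s, a). W (tup ys s) a) ` (X \<times> A)"
    unfolding Qt_def X'_def ys'_def rel_dup[OF T]
    by (rule image_cong[OF refl]) (simp add: W_def n'_def ys'_def split: prod.splits)
  have eqsat: "so_sat A RI FI SI (setv (setv e 0 ws) n' vs) re' fe
        (SEx (cvar ys x) (eqconj ys' x (SVar (cvar ys x)))) \<longleftrightarrow> (\<exists>a\<in>A. ws = W vs a)"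
    if ws: "ws \<in> tuples A n'" and vs: "vs \<in> tuples A n" for ws vs re'
  proof -
    have lw: "length ws = n'" and lv: "length vs = n" using ws vs by (auto simp: tuples_def)
    have nn: "n \<le> n'" using xt_len by (simp add: n_def n'_def ys'_def)
    have "so_sat A RI FI SI ((setv (setv e 0 ws) n' vs)(cvar ys x := a)) re' fe
        (eqconj ys' x (SVar (cvar ys x))) \<longleftrightarrow> ws = W vs a" for a
    proof -
      let ?E = "(setv (setv e 0 ws) n' vs)(cvar ys x := a)"
      have cv: "cvar ys x = n' + n" by (simp add: cvar_def n'_def n_def ys'_def)
      have E1: "\<forall>i<length ys'. ?E i = ws!i"
        using lw nn cv by (auto simp: setv_def n'_def)
      have E2: "\<forall>i<length vs. ?E (length ys' + i) = vs!i"
        using lv cv by (auto simp: setv_def n'_def)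
      have tm: "sotrm_eval FI ?E fe (SVar (cvar ys x)) = a" by simp
      have cond: "\<forall>i<length ys'. ys'!i \<noteq> x \<longrightarrow> i < length vs"
        using xt_nth lv by (auto simp: ys'_def n_def)
      show ?thesis
        using sat_eqconj[OF A(2) E1 E2 _ cond, of RI FI SI re' fe "SVar (cvar ys x)", unfolded tm] lw
        unfolding W_def n'_def by (simp add: fun_upd_def)
    qed
    then show ?thesis by simp
  qed
  have qd: "so_sat A RI FI SI e (re(Suc P := Q)) fe (qdef P (Suc P) n n'
        (SEx (cvar ys x) (eqconj ys' x (SVar (cvar ys x))))) \<longleftrightarrow> Q = Qt"
    if Q: "Q \<subseteq> tuples A n'" for Q
  proof -
    have "so_sat A RI FI SI e (re(Suc P := Q)) fe (qdef P (Suc P) n n'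
        (SEx (cvar ys x) (eqconj ys' x (SVar (cvar ys x))))) \<longleftrightarrow>
      (\<forall>ws\<in>tuples A n'. ws \<in> Q \<longleftrightarrow> (\<exists>vs\<in>tuples A n. vs \<in> re P \<and> (\<exists>a\<in>A. ws = W vs a)))"
      unfolding sat_qdef using eqsat by simp
    also have "\<dots> \<longleftrightarrow> (\<forall>ws\<in>tuples A n'. ws \<in> Q \<longleftrightarrow> ws \<in> Qt)"
    proof -
      have "(\<exists>vs\<in>tuples A n. vs \<in> re P \<and> (\<exists>a\<in>A. ws = W vs a)) \<longleftrightarrow> ws \<in> Qt" for ws
        unfolding R team_rel_tup Qt_eq
      proof
        assume "\<exists>vs\<in>tuples A n. vs \<in> tup ys ` X \<and> (\<exists>a\<in>A. ws = W vs a)"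
        then obtain s a where sa: "s \<in> X" "a \<in> A" "ws = W (tup ys s) a" by blast
        show "ws \<in> (\<lambda>(s, a). W (tup ys s) a) ` (X \<times> A)"
          by (rule image_eqI[of _ _ "(s, a)"]) (use sa in auto)
      next
        assume "ws \<in> (\<lambda>(s, a). W (tup ys s) a) ` (X \<times> A)"
        then obtain sa' where "sa' \<in> X \<times> A" "ws = (\<lambda>(s, a). W (tup ys s) a) sa'" by blast
        then obtain s a where sa: "s \<in> X" "a \<in> A" "ws = W (tup ys s) a" by (cases sa') auto
        then show "\<exists>vs\<in>tuples A n. vs \<in> tup ys ` X \<and> (\<exists>a\<in>A. ws = W vs a)"
          using tup_in[OF T sa(1)] n_def by blast
      qed
      then show ?thesis by simp
    qed
    also have "\<dots> \<longleftrightarrow> Q = Qt" by (rule eq_from_tuples[OF Q Qt_sub])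
    finally show ?thesis .
  qed
  have "so_sat A RI FI SI e re fe (allbody P ys x trp) \<longleftrightarrow> so_sat A RI FI SI e (re(Suc P := Qt)) fe trp"
    unfolding allbody_def using sat_body_generic[OF qd Qt_sub] by (simp add: n_def n'_def ys'_def)
  also have "\<dots> \<longleftrightarrow> dm_sat A RI FI X' p"
    by (rule IH) (use T' Qt_def ys'_def in auto)
  finally show ?thesis by (simp add: X'_def)
qed

lemma ex_count:
  assumes "finite D" "finite A" "A \<noteq> {}" "inj_on h X" "h ` X \<subseteq> D" "finite X"
  shows "(\<exists>g\<in>D \<rightarrow>\<^sub>E A. \<Phi> (restrict (g \<circ> h) X)) \<longleftrightarrow> (\<exists>F\<in>X \<rightarrow>\<^sub>E A. \<Phi> F)"
proof -
  let ?L = "{g \<in> D \<rightarrow>\<^sub>E A. \<Phi> (restrict (g \<circ> h) X)}" and ?R = "{F \<in> X \<rightarrow>\<^sub>E A. \<Phi> F}"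
  have c: "card ?L = card ?R * card A ^ (card D - card X)" by (rule count_ext) (use assms in auto)
  have pos: "card A ^ (card D - card X) > 0" using assms(2,3) by (simp add: card_gt_0_iff)
  have "finite (D \<rightarrow>\<^sub>E A)" using assms(1,2) by (intro finite_PiE) auto
  then have fL: "finite ?L" by (rule finite_subset[rotated]) blast
  have "finite (X \<rightarrow>\<^sub>E A)" using assms(6,2) by (intro finite_PiE) auto
  then have fR: "finite ?R" by (rule finite_subset[rotated]) blast
  have "?L \<noteq> {} \<longleftrightarrow> card ?L \<noteq> 0" by (subst card_0_eq[OF fL]) (rule refl)
  also have "\<dots> \<longleftrightarrow> card ?R \<noteq> 0" unfolding c using pos mult_eq_0_iff[of "card ?R" "card A ^ (card D - card X)"] by linarith
  also have "\<dots> \<longleftrightarrow> ?R \<noteq> {}" by (subst card_0_eq[OF fR]) (rule refl)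
  finally have "?L \<noteq> {} \<longleftrightarrow> ?R \<noteq> {}" .
  moreover have "?L \<noteq> {} \<longleftrightarrow> (\<exists>g\<in>D \<rightarrow>\<^sub>E A. \<Phi> (restrict (g \<circ> h) X))" by auto
  moreover have "?R \<noteq> {} \<longleftrightarrow> (\<exists>F\<in>X \<rightarrow>\<^sub>E A. \<Phi> F)" by auto
  ultimately show ?thesis by simp
qed

lemma most_count:
  assumes "finite D" "finite A" "A \<noteq> {}" "inj_on h X" "h ` X \<subseteq> D" "finite X"
  shows "card A ^ card D \<le> 2 * card {g \<in> D \<rightarrow>\<^sub>E A. \<Phi> (restrict (g \<circ> h) X)} \<longleftrightarrow>
         card A ^ card X \<le> 2 * card {F \<in> X \<rightarrow>\<^sub>E A. \<Phi> F}"
proof -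
  let ?L = "{g \<in> D \<rightarrow>\<^sub>E A. \<Phi> (restrict (g \<circ> h) X)}" and ?R = "{F \<in> X \<rightarrow>\<^sub>E A. \<Phi> F}"
  let ?m = "card A ^ (card D - card X)"
  have c: "card ?L = card ?R * ?m" by (rule count_ext) (use assms in auto)
  have pos: "?m > 0" using assms(2,3) by (simp add: card_gt_0_iff)
  have "card X = card (h ` X)" using card_image[OF assms(4)] by simp
  also have "\<dots> \<le> card D" using assms(1,5) by (rule card_mono)
  finally have le: "card X \<le> card D" .
  have "card A ^ card D = card A ^ card X * ?m" using le by (simp add: power_add[symmetric])
  then have "card A ^ card D \<le> 2 * card ?L \<longleftrightarrow> card A ^ card X * ?m \<le> (2 * card ?R) * ?m"
    using c by (simp add: mult.assoc)
  also have "\<dots> \<longleftrightarrow> card A ^ card X \<le> 2 * card ?R" using pos by simp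
  finally show ?thesis .
qed

lemma inj_h: "is_team A (set ys) X \<Longrightarrow> inj_on (\<lambda>s. tup ys s @ [c0]) X"
  using tup_inj[of A ys X] unfolding inj_on_def by simp

lemma h_sub: "is_team A (set ys) X \<Longrightarrow> c0 \<in> A \<Longrightarrow> (\<lambda>s. tup ys s @ [c0]) ` X \<subseteq> tuples A (Suc (length ys))"
  using tup_in[of A ys X] unfolding tuples_def by fastforce

lemma ev0: "trm_vars t \<subseteq> set ys \<Longrightarrow> sotrm_eval FI (setv e off (tup ys s)) fe (tt ys off t) = trm_eval FI s t"
  by (rule eval_tt[OF _ env_tup])

lemma ev0_map: "\<forall>t\<in>set ts. trm_vars t \<subseteq> set ys \<Longrightarrow>
   map (sotrm_eval FI (setv e off (tup ys s)) fe) (map (tt ys off) ts) = map (trm_eval FI s) ts"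
  by (simp add: ev0)

lemma ev_inner: "trm_vars t \<subseteq> set ys \<Longrightarrow>
  sotrm_eval FI (setv (setv e 0 (tup ys s)) (length ys) vs) fe (tt ys 0 t) = trm_eval FI s t"
proof (rule eval_tt)
  show "\<forall>i<length ys. setv (setv e 0 (tup ys s)) (length ys) vs (0 + i) = the (s (ys ! i))"
    using env_tup[of ys e 0 s] by (simp add: setv_out)
qed

lemma sat_orf: "so_sat A RI FI SI e re fe (orf P n a b) \<longleftrightarrow>
  (\<exists>Q1\<subseteq>tuples A n. \<exists>Q2\<subseteq>tuples A n. (\<forall>vs\<in>tuples A n. vs \<in> re P \<longleftrightarrow> vs \<in> Q1 \<or> vs \<in> Q2) \<and>
     so_sat A RI FI SI e (re(Suc P := Q1, Suc (Suc P) := Q2)) fe a \<and>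
     so_sat A RI FI SI e (re(Suc P := Q1, Suc (Suc P) := Q2)) fe b)"
proof -
  have inner: "\<And>re' vs. vs \<in> tuples A n \<Longrightarrow> so_sat A RI FI SI (setv e 0 vs) re' fe
     (iff (SRVar P (vars 0 n)) (sor (SRVar (Suc P) (vars 0 n)) (SRVar (Suc (Suc P)) (vars 0 n)))) \<longleftrightarrow>
     (vs \<in> re' P \<longleftrightarrow> vs \<in> re' (Suc P) \<or> vs \<in> re' (Suc (Suc P)))"
    by (simp add: eval_vars tuples_def)
  have key: "so_sat A RI FI SI e re' fe (alls 0 n (iff (SRVar P (vars 0 n)) (sor (SRVar (Suc P) (vars 0 n)) (SRVar (Suc (Suc P)) (vars 0 n))))) \<longleftrightarrow>
     (\<forall>vs\<in>tuples A n. vs \<in> re' P \<longleftrightarrow> vs \<in> re' (Suc P) \<or> vs \<in> re' (Suc (Suc P)))" for re'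
    unfolding sat_alls by (rule ball_cong[OF refl]) (rule inner)
  show ?thesis unfolding orf_def by (simp add: key)
qed

lemma tr_correct:
  "is_structure arF A FI \<Longrightarrow> dm_fr \<phi> \<subseteq> set ys \<Longrightarrow> is_team A (set ys) X \<Longrightarrow> re P = team_rel ys X \<Longrightarrow>
   so_sat A RI FI SI e re fe (tr \<phi> ys P) \<longleftrightarrow> dm_sat A RI FI X \<phi>"
proof (induction \<phi> arbitrary: ys P X e re fe)
  case (DEq t u)
  then show ?case by (simp add: sat_lit ev0)
next
  case (DNEq t u)
  then show ?case by (simp add: sat_lit ev0)
next
  case (DRel R ts)
  then have "\<forall>t\<in>set ts. trm_vars t \<subseteq> set ys" by auto
  with DRel show ?case by (simp add: sat_lit ev0_map del: map_map)
next
  case (DNRel R ts)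
  then have "\<forall>t\<in>set ts. trm_vars t \<subseteq> set ys" by auto
  with DNRel show ?case by (simp add: sat_lit ev0_map del: map_map)
next
  case (DDep ts)
  have A: "A \<noteq> {}" using DDep.prems(1) by (simp add: is_structure_def)
  show ?case
  proof (cases "ts = []")
    case True
    then show ?thesis using sat_STrue[OF A] by simp
  next
    case False
    have fr: "trm_vars t \<subseteq> set ys" if "t \<in> set ts" for t using DDep.prems(2) that by (simp add: UN_subset_iff)
    have lst: "last ts \<in> set ts" using False by simp
    have inner: "so_sat A RI FI SI (setv (setv e 0 (tup ys s)) (length ys) (tup ys s')) re fe
      (imp (conjL (map (\<lambda>t. SEq (tt ys 0 t) (tt ys (length ys) t)) (butlast ts)))
           (SEq (tt ys 0 (last ts)) (tt ys (length ys) (last ts)))) \<longleftrightarrow>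
      (map (trm_eval FI s) (butlast ts) = map (trm_eval FI s') (butlast ts) \<longrightarrow>
        trm_eval FI s (last ts) = trm_eval FI s' (last ts))" for s s'
    proof -
      let ?E = "setv (setv e 0 (tup ys s)) (length ys) (tup ys s')"
      have ev: "sotrm_eval FI ?E fe (tt ys 0 t) = trm_eval FI s t \<and> sotrm_eval FI ?E fe (tt ys (length ys) t) = trm_eval FI s' t"
        if "t \<in> set ts" for t
        using ev_inner[OF fr[OF that]] ev0[OF fr[OF that], of FI "setv e 0 (tup ys s)" "length ys" s' fe] by simp
      have "so_sat A RI FI SI ?E re fe (conjL (map (\<lambda>t. SEq (tt ys 0 t) (tt ys (length ys) t)) (butlast ts))) \<longleftrightarrow>
         (\<forall>t\<in>set (butlast ts). so_sat A RI FI SI ?E re fe (SEq (tt ys 0 t) (tt ys (length ys) t)))"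
        unfolding sat_conjL[OF A] by simp
      also have "\<dots> \<longleftrightarrow> (\<forall>t\<in>set (butlast ts). trm_eval FI s t = trm_eval FI s' t)"
      proof (rule ball_cong[OF refl])
        fix t assume "t \<in> set (butlast ts)"
        then show "so_sat A RI FI SI ?E re fe (SEq (tt ys 0 t) (tt ys (length ys) t)) \<longleftrightarrow> trm_eval FI s t = trm_eval FI s' t"
          using ev[OF in_set_butlastD] by simp
      qed
      also have "\<dots> \<longleftrightarrow> map (trm_eval FI s) (butlast ts) = map (trm_eval FI s') (butlast ts)"
        by (simp add: map_eq_conv)
      finally show ?thesis using ev[OF lst] by simp
    qed
    have "so_sat A RI FI SI e re fe (tr (DDep ts) ys P) \<longleftrightarrow>
      (\<forall>s\<in>X. \<forall>s'\<in>X. so_sat A RI FI SI (setv (setv e 0 (tup ys s)) (length ys) (tup ys s')) re fe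
      (imp (conjL (map (\<lambda>t. SEq (tt ys 0 t) (tt ys (length ys) t)) (butlast ts)))
           (SEq (tt ys 0 (last ts)) (tt ys (length ys) (last ts)))))"
      using False by (simp add: depf_def sat_lit[where re=re and P=P, OF DDep.prems(3,4)])
    also have "\<dots> \<longleftrightarrow> dm_sat A RI FI X (DDep ts)"
      using False by (simp add: inner del: sat_imp)
    finally show ?thesis .
  qed
next
  case (DNDep ts)
  have one: "map (sotrm_eval FI (setv e 0 vs) fe) (vars 0 (length ys)) = vs"
    if "vs \<in> tuples A (length ys)" for vs
    using that by (simp add: eval_vars tuples_def)
  have "so_sat A RI FI SI e re fe (tr (DNDep ts) ys P) \<longleftrightarrow> \<not> (\<exists>vs\<in>tuples A (length ys). vs \<in> re P)"
    unfolding tr.simps so_sat.simps sat_exs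
    by (intro arg_cong[where f=Not] bex_cong refl) (simp add: one)
  also have "\<dots> \<longleftrightarrow> X = {}"
    unfolding DNDep.prems(4) team_rel_tup using tup_in[OF DNDep.prems(3)] by blast
  finally show ?case by simp
next
  case (DAnd p q)
  then show ?case by simp
next
  case (DOr p q)
  note T = DOr.prems(3) and R = DOr.prems(4) and S = DOr.prems(1)
  have frp: "dm_fr p \<subseteq> set ys" and frq: "dm_fr q \<subseteq> set ys" using DOr.prems(2) by auto
  let ?n = "length ys"
  have RP: "re P = tup ys ` X" using R by (simp add: team_rel_tup)
  have "so_sat A RI FI SI e re fe (tr (DOr p q) ys P) \<longleftrightarrow>
    (\<exists>Q1\<subseteq>tuples A ?n. \<exists>Q2\<subseteq>tuples A ?n. (\<forall>vs\<in>tuples A ?n. vs \<in> re P \<longleftrightarrow> vs \<in> Q1 \<or> vs \<in> Q2) \<and>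
     so_sat A RI FI SI e (re(Suc P := Q1, Suc (Suc P) := Q2)) fe (tr p ys (Suc P)) \<and>
     so_sat A RI FI SI e (re(Suc P := Q1, Suc (Suc P) := Q2)) fe (tr q ys (Suc (Suc P))))"
    by (simp add: sat_orf)
  also have "\<dots> \<longleftrightarrow> dm_sat A RI FI X (DOr p q)"
  proof
    assume "\<exists>Q1\<subseteq>tuples A ?n. \<exists>Q2\<subseteq>tuples A ?n. (\<forall>vs\<in>tuples A ?n. vs \<in> re P \<longleftrightarrow> vs \<in> Q1 \<or> vs \<in> Q2) \<and>
     so_sat A RI FI SI e (re(Suc P := Q1, Suc (Suc P) := Q2)) fe (tr p ys (Suc P)) \<and>
     so_sat A RI FI SI e (re(Suc P := Q1, Suc (Suc P) := Q2)) fe (tr q ys (Suc (Suc P)))"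
    then obtain Q1 Q2 where Q: "Q1 \<subseteq> tuples A ?n" "Q2 \<subseteq> tuples A ?n"
      and cond: "\<forall>vs\<in>tuples A ?n. vs \<in> re P \<longleftrightarrow> vs \<in> Q1 \<or> vs \<in> Q2"
      and s1: "so_sat A RI FI SI e (re(Suc P := Q1, Suc (Suc P) := Q2)) fe (tr p ys (Suc P))"
      and s2: "so_sat A RI FI SI e (re(Suc P := Q1, Suc (Suc P) := Q2)) fe (tr q ys (Suc (Suc P)))"
      by (elim exE conjE) blast
    define Y where "Y = {s \<in> X. tup ys s \<in> Q1}"
    define Z where "Z = {s \<in> X. tup ys s \<in> Q2}"
    have TY: "is_team A (set ys) Y" by (rule team_sub[OF T]) (auto simp: Y_def)
    have TZ: "is_team A (set ys) Z" by (rule team_sub[OF T]) (auto simp: Z_def)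
    have rY: "team_rel ys Y = Q1"
    proof
      show "team_rel ys Y \<subseteq> Q1" by (auto simp: team_rel_tup Y_def)
      show "Q1 \<subseteq> team_rel ys Y"
      proof
        fix q assume q: "q \<in> Q1"
        then have qt: "q \<in> tuples A ?n" using Q(1) by (rule subsetD[rotated])
        have "q \<in> re P" using bspec[OF cond qt] q by simp
        then obtain s where "s \<in> X" "q = tup ys s" using RP by auto
        then show "q \<in> team_rel ys Y" using q by (auto simp: team_rel_tup Y_def)
      qed
    qed
    have rZ: "team_rel ys Z = Q2"
    proof
      show "team_rel ys Z \<subseteq> Q2" by (auto simp: team_rel_tup Z_def)
      show "Q2 \<subseteq> team_rel ys Z"
      proof
        fix q assume q: "q \<in> Q2"
        then have qt: "q \<in> tuples A ?n" using Q(2) by (rule subsetD[rotated])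
        have "q \<in> re P" using bspec[OF cond qt] q by simp
        then obtain s where "s \<in> X" "q = tup ys s" using RP by auto
        then show "q \<in> team_rel ys Z" using q by (auto simp: team_rel_tup Z_def)
      qed
    qed
    have XYZ: "X = Y \<union> Z"
    proof
      show "X \<subseteq> Y \<union> Z"
      proof
        fix s assume s: "s \<in> X"
        then have "tup ys s \<in> tuples A ?n" "tup ys s \<in> re P" using tup_in[OF T] RP by auto
        then show "s \<in> Y \<union> Z" using cond s by (auto simp: Y_def Z_def)
      qed
    qed (auto simp: Y_def Z_def)
    have i1: "so_sat A RI FI SI e (re(Suc P := Q1, Suc (Suc P) := Q2)) fe (tr p ys (Suc P)) \<longleftrightarrow> dm_sat A RI FI Y p"
      by (rule DOr.IH(1)[OF S frp TY]) (simp add: rY)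
    have i2: "so_sat A RI FI SI e (re(Suc P := Q1, Suc (Suc P) := Q2)) fe (tr q ys (Suc (Suc P))) \<longleftrightarrow> dm_sat A RI FI Z q"
      by (rule DOr.IH(2)[OF S frq TZ]) (simp add: rZ)
    have "dm_sat A RI FI Y p" using i1 s1 by simp
    moreover have "dm_sat A RI FI Z q" using i2 s2 by simp
    ultimately show "dm_sat A RI FI X (DOr p q)" using XYZ by auto
  next
    assume "dm_sat A RI FI X (DOr p q)"
    then obtain Y Z where XYZ: "X = Y \<union> Z" and sY: "dm_sat A RI FI Y p" and sZ: "dm_sat A RI FI Z q" by auto
    have TY: "is_team A (set ys) Y" by (rule team_sub[OF T]) (simp add: XYZ)
    have TZ: "is_team A (set ys) Z" by (rule team_sub[OF T]) (simp add: XYZ)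
    define Q1 where "Q1 = team_rel ys Y"
    define Q2 where "Q2 = team_rel ys Z"
    have Q: "Q1 \<subseteq> tuples A ?n" "Q2 \<subseteq> tuples A ?n"
      using tup_in[OF TY] tup_in[OF TZ] by (auto simp: Q1_def Q2_def team_rel_tup)
    have cond: "\<forall>vs\<in>tuples A ?n. vs \<in> re P \<longleftrightarrow> vs \<in> Q1 \<or> vs \<in> Q2"
      using RP XYZ by (auto simp: Q1_def Q2_def team_rel_tup)
    have i1: "so_sat A RI FI SI e (re(Suc P := Q1, Suc (Suc P) := Q2)) fe (tr p ys (Suc P)) \<longleftrightarrow> dm_sat A RI FI Y p"
      by (rule DOr.IH(1)[OF S frp TY]) (simp add: Q1_def)
    have i2: "so_sat A RI FI SI e (re(Suc P := Q1, Suc (Suc P) := Q2)) fe (tr q ys (Suc (Suc P))) \<longleftrightarrow> dm_sat A RI FI Z q"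
      by (rule DOr.IH(2)[OF S frq TZ]) (simp add: Q2_def)
    have s1: "so_sat A RI FI SI e (re(Suc P := Q1, Suc (Suc P) := Q2)) fe (tr p ys (Suc P))"
      using i1 sY by simp
    have s2: "so_sat A RI FI SI e (re(Suc P := Q1, Suc (Suc P) := Q2)) fe (tr q ys (Suc (Suc P)))"
      using i2 sZ by simp
    show "\<exists>Q1\<subseteq>tuples A ?n. \<exists>Q2\<subseteq>tuples A ?n. (\<forall>vs\<in>tuples A ?n. vs \<in> re P \<longleftrightarrow> vs \<in> Q1 \<or> vs \<in> Q2) \<and>
     so_sat A RI FI SI e (re(Suc P := Q1, Suc (Suc P) := Q2)) fe (tr p ys (Suc P)) \<and>
     so_sat A RI FI SI e (re(Suc P := Q1, Suc (Suc P) := Q2)) fe (tr q ys (Suc (Suc P)))"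
      by (rule exI[where x=Q1], rule conjI[OF Q(1)], rule exI[where x=Q2], intro conjI Q(2) cond s1 s2)
  qed
  finally show ?case .
next
  case (DEx x p)
  note S = DEx.prems(1) and T = DEx.prems(3) and R = DEx.prems(4)
  have fin: "finite A" and Ane: "A \<noteq> {}" using S by (auto simp: is_structure_def)
  have frp: "dm_fr p \<subseteq> set (xt ys x)" using DEx.prems(2) by auto
  have finX: "finite X" by (rule team_finite[OF fin T])
  let ?D = "tuples A (Suc (length ys))"
  let ?trp = "tr p (xt ys x) (Suc P)"
  let ?\<Phi> = "\<lambda>F. dm_sat A RI FI (team_sup X F x) p"
  have body: "so_sat A RI FI SI (e(cvar ys x := c0)) re (fe(0 := g)) (exbody P ys x ?trp) \<longleftrightarrow>
     ?\<Phi> (restrict (g \<circ> (\<lambda>s. tup ys s @ [c0])) X)" if c0: "c0 \<in> A" and g: "g \<in> ?D \<rightarrow>\<^sub>E A" for c0 g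
  proof -
    have e1: "(e(cvar ys x := c0)) (cvar ys x) = c0" by simp
    have f1: "(fe(0 := g)) 0 = g" by simp
    have IH': "so_sat A RI FI SI (e(cvar ys x := c0)) re' (fe(0 := g)) ?trp \<longleftrightarrow> dm_sat A RI FI X' p"
      if "is_team A (set (xt ys x)) X'" "re' (Suc P) = team_rel (xt ys x) X'" for X' re'
      by (rule DEx.IH[where re=re' and P="Suc P", OF S frp that])
    show ?thesis by (rule sat_exbody[where re=re and P=P and e="e(cvar ys x := c0)" and fe="fe(0 := g)",
       OF fin Ane T R e1 c0 f1 g IH'])
  qed
  have "so_sat A RI FI SI e re fe (tr (DEx x p) ys P) \<longleftrightarrow>
     (\<exists>c0\<in>A. \<exists>g\<in>?D \<rightarrow>\<^sub>E A. so_sat A RI FI SI (e(cvar ys x := c0)) re (fe(0 := g)) (exbody P ys x ?trp))"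
    by simp
  also have "\<dots> \<longleftrightarrow> (\<exists>c0\<in>A. \<exists>g\<in>?D \<rightarrow>\<^sub>E A. ?\<Phi> (restrict (g \<circ> (\<lambda>s. tup ys s @ [c0])) X))"
    using body by (intro bex_cong refl) simp
  also have "\<dots> \<longleftrightarrow> (\<exists>c0\<in>A. \<exists>F\<in>X \<rightarrow>\<^sub>E A. ?\<Phi> F)"
    by (intro bex_cong refl ex_count tuples_finite fin Ane inj_h[OF T] h_sub[OF T] finX)
  also have "\<dots> \<longleftrightarrow> (\<exists>F\<in>X \<rightarrow>\<^sub>E A. ?\<Phi> F)" using Ane by blast
  finally show ?case by simp
next
  case (DAll x p)
  note S = DAll.prems(1) and T = DAll.prems(3) and R = DAll.prems(4)
  have fin: "finite A" and Ane: "A \<noteq> {}" using S by (auto simp: is_structure_def)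
  have frp: "dm_fr p \<subseteq> set (xt ys x)" using DAll.prems(2) by auto
  have IH': "so_sat A RI FI SI e re' fe (tr p (xt ys x) (Suc P)) \<longleftrightarrow> dm_sat A RI FI X' p"
    if "is_team A (set (xt ys x)) X'" "re' (Suc P) = team_rel (xt ys x) X'" for X' re'
    by (rule DAll.IH[where re=re' and P="Suc P", OF S frp that])
  show ?case
    using sat_allbody[where re=re and P=P and e=e and fe=fe, OF fin Ane T R IH'] by simp
next
  case (DMost x p)
  note S = DMost.prems(1) and T = DMost.prems(3) and R = DMost.prems(4)
  have fin: "finite A" and Ane: "A \<noteq> {}" using S by (auto simp: is_structure_def)
  have frp: "dm_fr p \<subseteq> set (xt ys x)" using DMost.prems(2) by auto
  have finX: "finite X" by (rule team_finite[OF fin T])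
  let ?D = "tuples A (Suc (length ys))"
  let ?trp = "tr p (xt ys x) (Suc P)"
  let ?\<Phi> = "\<lambda>F. dm_sat A RI FI (team_sup X F x) p"
  have body: "so_sat A RI FI SI (e(cvar ys x := c0)) re (fe(0 := g)) (exbody P ys x ?trp) \<longleftrightarrow>
     ?\<Phi> (restrict (g \<circ> (\<lambda>s. tup ys s @ [c0])) X)" if c0: "c0 \<in> A" and g: "g \<in> ?D \<rightarrow>\<^sub>E A" for c0 g
  proof -
    have e1: "(e(cvar ys x := c0)) (cvar ys x) = c0" by simp
    have f1: "(fe(0 := g)) 0 = g" by simp
    have IH': "so_sat A RI FI SI (e(cvar ys x := c0)) re' (fe(0 := g)) ?trp \<longleftrightarrow> dm_sat A RI FI X' p"
      if "is_team A (set (xt ys x)) X'" "re' (Suc P) = team_rel (xt ys x) X'" for X' re'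
      by (rule DMost.IH[where re=re' and P="Suc P", OF S frp that])
    show ?thesis by (rule sat_exbody[where re=re and P=P and e="e(cvar ys x := c0)" and fe="fe(0 := g)",
       OF fin Ane T R e1 c0 f1 g IH'])
  qed
  have setq: "{g \<in> ?D \<rightarrow>\<^sub>E A. so_sat A RI FI SI (e(cvar ys x := c0)) re (fe(0 := g)) (exbody P ys x ?trp)} =
     {g \<in> ?D \<rightarrow>\<^sub>E A. ?\<Phi> (restrict (g \<circ> (\<lambda>s. tup ys s @ [c0])) X)}" if c0: "c0 \<in> A" for c0
    using body[OF c0] by blast
  have cnt: "card A ^ card ?D \<le> 2 * card {g \<in> ?D \<rightarrow>\<^sub>E A. ?\<Phi> (restrict (g \<circ> (\<lambda>s. tup ys s @ [c0])) X)} \<longleftrightarrow>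
     card A ^ card X \<le> 2 * card {F \<in> X \<rightarrow>\<^sub>E A. ?\<Phi> F}" if c0: "c0 \<in> A" for c0
    by (intro most_count tuples_finite fin Ane inj_h[OF T] h_sub[OF T c0] finX)
  have "so_sat A RI FI SI e re fe (tr (DMost x p) ys P) \<longleftrightarrow>
     (\<exists>c0\<in>A. card A ^ (card A ^ Suc (length ys)) \<le> 2 * card {g \<in> ?D \<rightarrow>\<^sub>E A. so_sat A RI FI SI (e(cvar ys x := c0)) re (fe(0 := g)) (exbody P ys x ?trp)})"
    by simp
  also have "\<dots> \<longleftrightarrow> (\<exists>c0\<in>A. card A ^ card X \<le> 2 * card {F \<in> X \<rightarrow>\<^sub>E A. ?\<Phi> F})"
  proof (rule bex_cong[OF refl])
    fix c0 assume c0: "c0 \<in> A"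
    show "card A ^ (card A ^ Suc (length ys)) \<le> 2 * card {g \<in> ?D \<rightarrow>\<^sub>E A. so_sat A RI FI SI (e(cvar ys x := c0)) re (fe(0 := g)) (exbody P ys x ?trp)} \<longleftrightarrow>
      card A ^ card X \<le> 2 * card {F \<in> X \<rightarrow>\<^sub>E A. ?\<Phi> F}"
      unfolding setq[OF c0] using cnt[OF c0, unfolded tuples_card[OF fin]] .
  qed
  also have "\<dots> \<longleftrightarrow> card A ^ card X \<le> 2 * card {F \<in> X \<rightarrow>\<^sub>E A. ?\<Phi> F}" using Ane by blast
  finally show ?case by simp
qed

theorem mainTheorem9:
  fixes arR :: "'r \<Rightarrow> nat" and arF :: "'f \<Rightarrow> nat"
    and \<phi> :: "('r, 'f) dm" and ys :: "nat list"
  assumes "dm_wf arR arF \<phi>" and "distinct ys" and "set ys = dm_fr \<phi>"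
  shows "\<exists>\<psi>. so_sentence arR arF (length ys) \<psi> \<and>
     (\<forall>(A :: nat set) RI FI X. is_structure arF A FI \<and> is_team A (dm_fr \<phi>) X \<longrightarrow>
        (dm_sat A RI FI X \<phi> \<longleftrightarrow> so_models A RI FI (team_rel ys X) \<psi>))"
proof -
  define n where "n = length ys"
  define \<psi> :: "('r, 'f) so" where
    "\<psi> = SExR 0 n (SAnd (alls 0 n (iff (SRVar 0 (vars 0 n)) (SS (vars 0 n)))) (tr \<phi> ys 0))"
  have vw: "\<forall>t\<in>set (vars 0 n). sotrm_wf arF Map.empty ({} \<union> {0..<0 + n}) t" by (rule wf_vars) simp
  have "so_wf arR arF n [0 \<mapsto> n] Map.empty {} (tr \<phi> ys 0)"
    by (rule wf_tr) (use assms n_def in auto)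
  then have wf: "so_sentence arR arF (length ys) \<psi>"
    unfolding so_sentence_def \<psi>_def using vw by (simp add: wf_alls n_def[symmetric])
  have sem: "dm_sat A RI FI X \<phi> \<longleftrightarrow> so_models A RI FI (team_rel ys X) \<psi>"
    if S: "is_structure arF A FI" and T0: "is_team A (dm_fr \<phi>) X" for A :: "nat set" and RI FI X
  proof -
    have T: "is_team A (set ys) X" using T0 assms(3) by simp
    let ?SI = "team_rel ys X"
    let ?e = "\<lambda>_::nat. undefined :: nat" and ?re = "\<lambda>_::nat. {} :: nat list set" and ?fe = "\<lambda>_ _. undefined :: nat"
    have SIsub: "?SI \<subseteq> tuples A n" using tup_in[OF T] by (auto simp: team_rel_tup n_def)
    have al: "so_sat A RI FI ?SI ?e (?re(0 := Q)) ?fe (alls 0 n (iff (SRVar 0 (vars 0 n)) (SS (vars 0 n)))) \<longleftrightarrow> Q = ?SI"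
      if Q: "Q \<subseteq> tuples A n" for Q
    proof -
      have "so_sat A RI FI ?SI ?e (?re(0 := Q)) ?fe (alls 0 n (iff (SRVar 0 (vars 0 n)) (SS (vars 0 n)))) \<longleftrightarrow>
        (\<forall>vs\<in>tuples A n. vs \<in> Q \<longleftrightarrow> vs \<in> ?SI)"
        unfolding sat_alls by (rule ball_cong[OF refl]) (simp add: eval_vars tuples_def)
      also have "\<dots> \<longleftrightarrow> Q = ?SI" by (rule eq_from_tuples[OF Q SIsub])
      finally show ?thesis .
    qed
    have "so_models A RI FI ?SI \<psi> \<longleftrightarrow> so_sat A RI FI ?SI ?e (?re(0 := ?SI)) ?fe (tr \<phi> ys 0)"
      unfolding so_models_def \<psi>_def using sat_body_generic[OF al SIsub] .
    also have "\<dots> \<longleftrightarrow> dm_sat A RI FI X \<phi>"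
      by (rule tr_correct[OF S _ T]) (use assms(3) in auto)
    finally show ?thesis by simp
  qed
  show ?thesis using wf sem by blast
qed

end
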